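(* Let $(E,\mathcal{I})$ be the partition matroid given by a partition $E_1,\dots,E_b$ of $E$ and integers $k_z$ with $2\le k_z\le|E_z|$, and let $\gamma=\min_{z\in[b]}\lfloor k_z/2\rfloor/k_z$. Suppose $f:2^E\times O^E\to\mathbb{R}_{\ge0}$ is worst-case monotone, worst-case submodular and adaptive submodular with respect to $p(\phi)$, and satisfies minimal dependency. Then the adaptive hybrid policy $\pi^m=\pi^{mw}@\pi^{ma}$ has robustness ratio $\alpha(\pi^m)\ge\frac{\gamma}{\gamma+1}$ (i.e. $f_{wc}(\pi^m)\ge\frac{\gamma}{\gamma+1}f_{wc}(\pi^*_{wc})$ and $f_{avg}(\pi^m)\ge\frac{\gamma}{\gamma+1}f_{avg}(\pi^*_{avg})$).
   Context: Setting. $E$ is a finite set of $n$ items and $O$ a finite set of states. A realization is a function $\phi:E\to O$; $p$ is a probability distribution (prior) on the set of all realizations, $\Phi$ denotes a random realization with law $p$, and $U^+=\{\phi: p(\phi)>0\}$. A partial realization is a function $\psi:S\to O$ with $S\subseteq E$, $\mathrm{dom}(\psi)=S$; it is identified with the set of pairs $\{(e,\psi(e)):e\in S\}$, so $\psi\subseteq\psi'$ means $\mathrm{dom}(\psi)\subseteq\mathrm{dom}(\psi')$ and they agree on $\mathrm{dom}(\psi)$. A realization $\phi$ is consistent with $\psi$, written $\phi\sim\psi$, if it agrees with $\psi$ on $\mathrm{dom}(\psi)$. Only partial realizations with $\Pr[\Phi\sim\psi]>0$ are considered, and $p(\phi\mid\psi)=\Pr[\Phi=\phi\mid\Phi\sim\psi]$.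 For $S\subseteq E$ and a partial realization $\psi$, $f(S,\psi)=\mathbb{E}[f(S,\Phi)\mid\Phi\sim\psi]$. For $e\notin\mathrm{dom}(\psi)$, let $O(e,\psi)=\{o\in O:\exists\phi\text{ with }p(\phi\mid\psi)>0,\ \phi(e)=o\}$ and define the worst-case marginal utility $f_{wc}(e\mid\psi)=\min_{o\in O(e,\psi)}\{f(\mathrm{dom}(\psi)\cup\{e\},\psi\cup\{(e,o)\})-f(\mathrm{dom}(\psi),\psi)\}$ and the expected marginal utility $f_{avg}(e\mid\psi)=\mathbb{E}[f(\mathrm{dom}(\psi)\cup\{e\},\Phi)-f(\mathrm{dom}(\psi),\Phi)\mid\Phi\sim\psi]$. $f$ is worst-case submodular if $f_{wc}(e\mid\psi)\ge f_{wc}(e\mid\psi')$ for all partial realizations $\psi\subseteq\psi'$ and all $e\in E\setminus\mathrm{dom}(\psi')$; it is worst-case monotone if $f_{wc}(e\mid\psi)\ge0$ for all $\psi$ and $e\notin\mathrm{dom}(\psi)$. $f$ is adaptive submodular if $f_{avg}(e\mid\psi)\ge f_{avg}(e\mid\psi')$ for all $\psi\subseteq\psi'$ and $e\in E\setminus\mathrm{dom}(\psi')$, and adaptive monotone if $f_{avg}(e\mid\psi)\ge0$ always. $f$ satisfies minimal dependency if $f(\mathrm{dom}(\psi),\psi)=f(\mathrm{dom}(\psi),\phi)$ for every partial realization $\psi$ and every $\phi\in U^+$ with $\phi\sim\psi$. Policies. A (deterministic) policy $\pi$ is a rule which, given the current observation (the partial realization of the items selected so far), either selects a new item or stops; after an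 item $e$ is selected under realization $\phi$, the state $\phi(e)$ is observed. $E(\pi,\phi)$ is the set of items selected by $\pi$ under $\phi$. $f_{avg}(\pi)=\mathbb{E}[f(E(\pi,\Phi),\Phi)]$ and $f_{wc}(\pi)=\min_{\phi\in U^+}f(E(\pi,\phi),\phi)$. The concatenation $\pi@\pi'$ runs $\pi$ and then runs $\pi'$ from scratch, ignoring the observations obtained by $\pi$; its selected set is the union of the two. $\pi^*_{wc}$ (resp. $\pi^*_{avg}$) maximizes $f_{wc}(\pi)$ (resp. $f_{avg}(\pi)$) over policies with $E(\pi,\phi)\in\mathcal{I}$ for all $\phi\in U^+$; the robustness ratio is $\alpha(\pi)=\min\{f_{wc}(\pi)/f_{wc}(\pi^*_{wc}),\ f_{avg}(\pi)/f_{avg}(\pi^*_{avg})\}$. Partition matroid: $\mathcal{I}=\{I\subseteq E:|I\cap E_z|\le k_z\ \forall z\in[b]\}$. Policy $\pi^{mw}$: starting from the empty observation $\psi=\emptyset$, for $z=1,\dots,b$ in turn, perform $\lfloor k_z/2\rfloor$ iterations, each selecting $e\in\arg\max_{e\in E_z\setminus\mathrm{dom}(\psi)}f_{wc}(e\mid\psi)$ for the current observation $\psi$, observing $\Phi(e)$ and adding $(e,\Phi(e))$ to $\psi$. Policy $\pi^{ma}$: identical except that each meta-round $z$ performs $\lceil k_z/2\rceil$ iterations and uses $f_{avg}(e\mid\psi)$ in place of $f_{wc}(e\mid\psi)$. Ties are broken arbitrarily. $\pi^m=\pi^{mw}@\pi^{ma}$. *)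

theory Defs
  imports Complex_Main
begin

(* Items: the finite type 'e (E = UNIV); states: the finite type 'o (O = UNIV).
   Realizations: 'e \<Rightarrow> 'o.  Partial realizations: maps 'e \<rightharpoonup> 'o. *)

definition is_prior :: "(('e::finite \<Rightarrow> 'o::finite) \<Rightarrow> real) \<Rightarrow> bool" where
  "is_prior p \<longleftrightarrow> (\<forall>\<phi>. 0 \<le> p \<phi>) \<and> (\<Sum>\<phi>\<in>UNIV. p \<phi>) = 1"

definition consistent :: "('e \<Rightarrow> 'o) \<Rightarrow> ('e \<rightharpoonup> 'o) \<Rightarrow> bool" where
  "consistent \<phi> \<psi> \<longleftrightarrow> (\<forall>e\<in>dom \<psi>. \<psi> e = Some (\<phi> e))"

definition prob_cons :: "(('e::finite \<Rightarrow> 'o::finite) \<Rightarrow> real) \<Rightarrow> ('e \<rightharpoonup> 'o) \<Rightarrow> real" where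
  "prob_cons p \<psi> = (\<Sum>\<phi>\<in>{\<phi>. consistent \<phi> \<psi>}. p \<phi>)"

definition valid_pr :: "(('e::finite \<Rightarrow> 'o::finite) \<Rightarrow> real) \<Rightarrow> ('e \<rightharpoonup> 'o) \<Rightarrow> bool" where
  "valid_pr p \<psi> \<longleftrightarrow> prob_cons p \<psi> > 0"

definition cond_f :: "(('e::finite \<Rightarrow> 'o::finite) \<Rightarrow> real) \<Rightarrow> ('e set \<Rightarrow> ('e \<Rightarrow> 'o) \<Rightarrow> real)
    \<Rightarrow> 'e set \<Rightarrow> ('e \<rightharpoonup> 'o) \<Rightarrow> real" where
  "cond_f p f S \<psi> = (\<Sum>\<phi>\<in>{\<phi>. consistent \<phi> \<psi>}. p \<phi> * f S \<phi>) / prob_cons p \<psi>"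

definition states_at :: "(('e::finite \<Rightarrow> 'o::finite) \<Rightarrow> real) \<Rightarrow> 'e \<Rightarrow> ('e \<rightharpoonup> 'o) \<Rightarrow> 'o set" where
  "states_at p e \<psi> = {s. \<exists>\<phi>. p \<phi> / prob_cons p \<psi> > 0 \<and> consistent \<phi> \<psi> \<and> \<phi> e = s}"

definition fwc_marg :: "(('e::finite \<Rightarrow> 'o::finite) \<Rightarrow> real) \<Rightarrow> ('e set \<Rightarrow> ('e \<Rightarrow> 'o) \<Rightarrow> real)
    \<Rightarrow> 'e \<Rightarrow> ('e \<rightharpoonup> 'o) \<Rightarrow> real" where
  "fwc_marg p f e \<psi> = Min ((\<lambda>s. cond_f p f (dom \<psi> \<union> {e}) (\<psi>(e \<mapsto> s)) - cond_f p f (dom \<psi>) \<psi>)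
                           ` states_at p e \<psi>)"

definition favg_marg :: "(('e::finite \<Rightarrow> 'o::finite) \<Rightarrow> real) \<Rightarrow> ('e set \<Rightarrow> ('e \<Rightarrow> 'o) \<Rightarrow> real)
    \<Rightarrow> 'e \<Rightarrow> ('e \<rightharpoonup> 'o) \<Rightarrow> real" where
  "favg_marg p f e \<psi> =
     (\<Sum>\<phi>\<in>{\<phi>. consistent \<phi> \<psi>}. p \<phi> * (f (dom \<psi> \<union> {e}) \<phi> - f (dom \<psi>) \<phi>)) / prob_cons p \<psi>"

definition wc_submodular where
  "wc_submodular p f \<longleftrightarrow> (\<forall>\<psi> \<psi>' e. valid_pr p \<psi> \<and> valid_pr p \<psi>' \<and> \<psi> \<subseteq>\<^sub>m \<psi>' \<and> e \<notin> dom \<psi>'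
      \<longrightarrow> fwc_marg p f e \<psi> \<ge> fwc_marg p f e \<psi>')"

definition wc_monotone where
  "wc_monotone p f \<longleftrightarrow> (\<forall>\<psi> e. valid_pr p \<psi> \<and> e \<notin> dom \<psi> \<longrightarrow> fwc_marg p f e \<psi> \<ge> 0)"

definition adaptive_submodular where
  "adaptive_submodular p f \<longleftrightarrow> (\<forall>\<psi> \<psi>' e. valid_pr p \<psi> \<and> valid_pr p \<psi>' \<and> \<psi> \<subseteq>\<^sub>m \<psi>' \<and> e \<notin> dom \<psi>'
      \<longrightarrow> favg_marg p f e \<psi> \<ge> favg_marg p f e \<psi>')"

definition minimal_dependency where
  "minimal_dependency p f \<longleftrightarrow> (\<forall>\<psi> \<phi>. valid_pr p \<psi> \<and> p \<phi> > 0 \<and> consistent \<phi> \<psi>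
      \<longrightarrow> cond_f p f (dom \<psi>) \<psi> = f (dom \<psi>) \<phi>)"

(* Deterministic policies: given the current observation, select an item (Some e) or stop (None).
   Selecting an already-observed item is treated as stopping. *)
type_synonym ('e, 'o) policy = "('e \<rightharpoonup> 'o) \<Rightarrow> 'e option"

definition policy_step :: "('e, 'o) policy \<Rightarrow> ('e \<Rightarrow> 'o) \<Rightarrow> ('e \<rightharpoonup> 'o) \<Rightarrow> ('e \<rightharpoonup> 'o)" where
  "policy_step \<pi> \<phi> \<psi> = (case \<pi> \<psi> of None \<Rightarrow> \<psi>
                         | Some e \<Rightarrow> if e \<in> dom \<psi> then \<psi> else \<psi>(e \<mapsto> \<phi> e))"

(* final observation: at most |E| selections can happen *)
definition final_obs :: "('e::finite, 'o) policy \<Rightarrow> ('e \<Rightarrow> 'o) \<Rightarrow> ('e \<rightharpoonup> 'o)" where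
  "final_obs \<pi> \<phi> = (policy_step \<pi> \<phi> ^^ card (UNIV :: 'e set)) Map.empty"

definition sel :: "('e::finite, 'o) policy \<Rightarrow> ('e \<Rightarrow> 'o) \<Rightarrow> 'e set" where
  "sel \<pi> \<phi> = dom (final_obs \<pi> \<phi>)"

(* E(\<pi> @ \<pi>', \<phi>) = E(\<pi>,\<phi>) \<union> E(\<pi>',\<phi>) *)
definition sel_concat :: "('e::finite, 'o) policy \<Rightarrow> ('e, 'o) policy \<Rightarrow> ('e \<Rightarrow> 'o) \<Rightarrow> 'e set" where
  "sel_concat \<pi> \<pi>' \<phi> = sel \<pi> \<phi> \<union> sel \<pi>' \<phi>"

definition favg_pol :: "(('e::finite \<Rightarrow> 'o::finite) \<Rightarrow> real) \<Rightarrow> ('e set \<Rightarrow> ('e \<Rightarrow> 'o) \<Rightarrow> real)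
    \<Rightarrow> (('e \<Rightarrow> 'o) \<Rightarrow> 'e set) \<Rightarrow> real" where
  "favg_pol p f Sel = (\<Sum>\<phi>\<in>UNIV. p \<phi> * f (Sel \<phi>) \<phi>)"

definition fwc_pol :: "(('e::finite \<Rightarrow> 'o::finite) \<Rightarrow> real) \<Rightarrow> ('e set \<Rightarrow> ('e \<Rightarrow> 'o) \<Rightarrow> real)
    \<Rightarrow> (('e \<Rightarrow> 'o) \<Rightarrow> 'e set) \<Rightarrow> real" where
  "fwc_pol p f Sel = Min ((\<lambda>\<phi>. f (Sel \<phi>) \<phi>) ` {\<phi>. p \<phi> > 0})"

definition pm_indep :: "nat \<Rightarrow> (nat \<Rightarrow> 'e set) \<Rightarrow> (nat \<Rightarrow> nat) \<Rightarrow> 'e set \<Rightarrow> bool" where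
  "pm_indep b Ez k I \<longleftrightarrow> (\<forall>z\<in>{1..b}. card (I \<inter> Ez z) \<le> k z)"

definition feasible_policy where
  "feasible_policy p b Ez k \<pi> \<longleftrightarrow> (\<forall>\<phi>. p \<phi> > 0 \<longrightarrow> pm_indep b Ez k (sel \<pi> \<phi>))"

(* On an observation \<psi>, the current meta-round is the least z \<in> [b] whose quota
   is not yet filled (items of E_z can only have been chosen in round z); if none, stop.
   Ties broken arbitrarily (any choice of argmax, possibly depending on \<psi>). *)
definition meta_greedy :: "(('e::finite \<Rightarrow> 'o::finite) \<Rightarrow> real) \<Rightarrow> ('e \<Rightarrow> ('e \<rightharpoonup> 'o) \<Rightarrow> real)
    \<Rightarrow> nat \<Rightarrow> (nat \<Rightarrow> 'e set) \<Rightarrow> (nat \<Rightarrow> nat) \<Rightarrow> ('e, 'o) policy \<Rightarrow> bool" where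
  "meta_greedy p score b Ez q \<pi> \<longleftrightarrow>
    (\<forall>\<psi>. valid_pr p \<psi> \<longrightarrow>
      (if \<exists>z\<in>{1..b}. card (dom \<psi> \<inter> Ez z) < q z then
         (let z = (LEAST z. z \<in> {1..b} \<and> card (dom \<psi> \<inter> Ez z) < q z) in
           \<exists>e. \<pi> \<psi> = Some e \<and> e \<in> Ez z - dom \<psi> \<and>
               (\<forall>e'\<in>Ez z - dom \<psi>. score e' \<psi> \<le> score e \<psi>))
       else \<pi> \<psi> = None))"

definition is_pi_mw where
  "is_pi_mw p f b Ez k \<pi> \<longleftrightarrow> meta_greedy p (fwc_marg p f) b Ez (\<lambda>z. k z div 2) \<pi>"

definition is_pi_ma where
  "is_pi_ma p f b Ez k \<pi> \<longleftrightarrow> meta_greedy p (favg_marg p f) b Ez (\<lambda>z. (k z + 1) div 2) \<pi>"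

end

theory Submission
  imports Defs
begin



definition run :: "('e::finite, 'o) policy \<Rightarrow> ('e \<Rightarrow> 'o) \<Rightarrow> nat \<Rightarrow> ('e \<rightharpoonup> 'o)" where
  "run \<pi> \<phi> n = (policy_step \<pi> \<phi> ^^ n) Map.empty"

lemma run_0[simp]: "run \<pi> \<phi> 0 = Map.empty" by (simp add: run_def)
lemma run_Suc: "run \<pi> \<phi> (Suc n) = policy_step \<pi> \<phi> (run \<pi> \<phi> n)" by (simp add: run_def)
lemma final_obs_run: "final_obs \<pi> \<phi> = run \<pi> \<phi> (card (UNIV::'e set))"
  for \<pi> :: "('e::finite,'o) policy" by (simp add: run_def final_obs_def)

lemma dom_step: "dom (policy_step \<pi> \<phi> \<psi>) = (case \<pi> \<psi> of None \<Rightarrow> dom \<psi> | Some e \<Rightarrow> insert e (dom \<psi>))"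
  by (auto simp: policy_step_def split: option.splits if_splits)

lemma step_le: "\<psi> \<subseteq>\<^sub>m policy_step \<pi> \<phi> \<psi>"
  by (auto simp: policy_step_def map_le_def split: option.splits)

lemma cons_step: "consistent \<phi> \<psi> \<Longrightarrow> consistent \<phi> (policy_step \<pi> \<phi> \<psi>)"
  by (auto simp: policy_step_def consistent_def split: option.splits)

lemma cons_run: "consistent \<phi> (run \<pi> \<phi> n)"
  by (induction n) (auto simp: run_Suc consistent_def intro!: cons_step[unfolded consistent_def])

lemma run_mono: "m \<le> n \<Longrightarrow> run \<pi> \<phi> m \<subseteq>\<^sub>m run \<pi> \<phi> n"
proof (induction n)
  case 0 then show ?case by simp
next
  case (Suc n)
  show ?case
  proof (cases "m = Suc n")
    case False
    then have "m \<le> n" using Suc by simp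
    then show ?thesis using Suc.IH step_le map_le_trans by (metis run_Suc)
  qed simp
qed

lemma run_det:
  assumes "consistent \<phi>' (run \<pi> \<phi> n)" "m \<le> n"
  shows "run \<pi> \<phi>' m = run \<pi> \<phi> m"
  using assms(2)
proof (induction m)
  case 0 then show ?case by simp
next
  case (Suc m)
  then have IH: "run \<pi> \<phi>' m = run \<pi> \<phi> m" by simp
  have le: "run \<pi> \<phi> (Suc m) \<subseteq>\<^sub>m run \<pi> \<phi> n" using Suc.prems run_mono by blast
  show ?case
  proof (cases "\<pi> (run \<pi> \<phi> m)")
    case None then show ?thesis by (simp add: run_Suc IH policy_step_def)
  next
    case (Some e)
    show ?thesis
    proof (cases "e \<in> dom (run \<pi> \<phi> m)")
      case True then show ?thesis using Some by (simp add: run_Suc IH policy_step_def)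
    next
      case False
      have "run \<pi> \<phi> (Suc m) e = Some (\<phi> e)" using Some False by (simp add: run_Suc policy_step_def)
      then have "run \<pi> \<phi> n e = Some (\<phi> e)" using le by (metis domI map_le_def)
      then have "\<phi>' e = \<phi> e" using assms(1) unfolding consistent_def by (metis domI option.inject)
      then show ?thesis using Some False by (simp add: run_Suc IH policy_step_def)
    qed
  qed
qed

lemma prob_cons_ge:
  assumes "is_prior p" "consistent \<phi> \<psi>"
  shows "p \<phi> \<le> prob_cons p \<psi>"
proof -
  have "p \<phi> = (\<Sum>\<phi>'\<in>{\<phi>}. p \<phi>')" by simp
  also have "\<dots> \<le> prob_cons p \<psi>" unfolding prob_cons_def
    using assms by (intro sum_mono2) (auto simp: is_prior_def)
  finally show ?thesis .
qed

lemma valid_of: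
  assumes "is_prior p" "p \<phi> > 0" "consistent \<phi> \<psi>"
  shows "valid_pr p \<psi>"
  using prob_cons_ge[OF assms(1,3)] assms(2) by (simp add: valid_pr_def)

lemma valid_ex:
  assumes "is_prior p" "valid_pr p \<psi>"
  obtains \<phi> where "p \<phi> > 0" "consistent \<phi> \<psi>"
proof -
  have "(\<Sum>\<phi>\<in>{\<phi>. consistent \<phi> \<psi>}. p \<phi>) > 0" using assms by (simp add: valid_pr_def prob_cons_def)
  then obtain \<phi> where "consistent \<phi> \<psi>" "p \<phi> \<noteq> 0"
    by (metis (mono_tags, lifting) less_irrefl mem_Collect_eq sum.neutral)
  moreover have "p \<phi> \<ge> 0" using assms by (simp add: is_prior_def)
  ultimately show ?thesis using that by force
qed

lemma states_at_iff:
  assumes "is_prior p" "valid_pr p \<psi>"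
  shows "s \<in> states_at p e \<psi> \<longleftrightarrow> (\<exists>\<phi>. p \<phi> > 0 \<and> consistent \<phi> \<psi> \<and> \<phi> e = s)"
  using assms by (auto simp: states_at_def valid_pr_def divide_pos_pos zero_less_divide_iff)

lemma states_at_ne:
  assumes "is_prior p" "valid_pr p \<psi>"
  shows "states_at p e \<psi> \<noteq> {}"
  using valid_ex[OF assms] states_at_iff[OF assms] by blast

lemma cons_upd: "consistent \<phi> \<psi> \<Longrightarrow> consistent \<phi> (\<psi>(e \<mapsto> \<phi> e))"
  by (auto simp: consistent_def)

lemma fwc_le:
  assumes "is_prior p" "valid_pr p \<psi>" "s \<in> states_at p e \<psi>"
  shows "fwc_marg p f e \<psi> \<le> cond_f p f (dom \<psi> \<union> {e}) (\<psi>(e \<mapsto> s)) - cond_f p f (dom \<psi>) \<psi>"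
  unfolding fwc_marg_def using assms by (intro Min_le) auto

lemma fwc_le_actual:
  assumes prior: "is_prior p" and md: "minimal_dependency p f"
    and pos: "p \<phi> > 0" and c: "consistent \<phi> \<psi>"
  shows "fwc_marg p f e \<psi> \<le> f (dom \<psi> \<union> {e}) \<phi> - f (dom \<psi>) \<phi>"
proof -
  have v: "valid_pr p \<psi>" using valid_of[OF prior pos c] .
  have s: "\<phi> e \<in> states_at p e \<psi>" using states_at_iff[OF prior v] pos c by blast
  have c2: "consistent \<phi> (\<psi>(e \<mapsto> \<phi> e))" using cons_upd[OF c] .
  have v2: "valid_pr p (\<psi>(e \<mapsto> \<phi> e))" using valid_of[OF prior pos c2] .
  have "cond_f p f (dom \<psi>) \<psi> = f (dom \<psi>) \<phi>" using md v pos c by (simp add: minimal_dependency_def)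
  moreover have "cond_f p f (dom (\<psi>(e \<mapsto> \<phi> e))) (\<psi>(e \<mapsto> \<phi> e)) = f (dom (\<psi>(e \<mapsto> \<phi> e))) \<phi>"
    using md v2 pos c2 unfolding minimal_dependency_def by blast
  ultimately show ?thesis using fwc_le[OF prior v s, of f] by simp
qed

lemma pw_mono1:
  assumes prior: "is_prior p" and md: "minimal_dependency p f" and wm: "wc_monotone p f"
    and pos: "p \<phi> > 0"
  shows "f S \<phi> \<le> f (insert e S) \<phi>"
proof (cases "e \<in> S")
  case True then show ?thesis by (simp add: insert_absorb)
next
  case False
  define \<psi> where "\<psi> = (\<lambda>x. if x \<in> S then Some (\<phi> x) else None)"
  have c: "consistent \<phi> \<psi>" by (auto simp: \<psi>_def consistent_def dom_def split: if_splits)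
  have d: "dom \<psi> = S" by (auto simp: \<psi>_def dom_def)
  have v: "valid_pr p \<psi>" using valid_of[OF prior pos c] .
  have "0 \<le> fwc_marg p f e \<psi>" using wm v False d by (simp add: wc_monotone_def)
  also have "\<dots> \<le> f (dom \<psi> \<union> {e}) \<phi> - f (dom \<psi>) \<phi>" by (rule fwc_le_actual[OF prior md pos c])
  finally show ?thesis using d by simp
qed

lemma pw_mono:
  fixes f :: "'e::finite set \<Rightarrow> ('e \<Rightarrow> 'o::finite) \<Rightarrow> real"
  assumes prior: "is_prior p" and md: "minimal_dependency p f" and wm: "wc_monotone p f"
    and pos: "p \<phi> > 0" and sub: "S \<subseteq> T"
  shows "f S \<phi> \<le> f T \<phi>"
proof -
  have "\<forall>S. f S \<phi> \<le> f (S \<union> D) \<phi>" for D :: "'e set"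
  proof (induction D rule: finite_induct[OF finite])
    case 1 then show ?case by simp
  next
    case (2 x F)
    show ?case
    proof
      fix S
      have "f S \<phi> \<le> f (S \<union> F) \<phi>" using 2 by blast
      also have "\<dots> \<le> f (insert x (S \<union> F)) \<phi>" by (rule pw_mono1[OF prior md wm pos])
      finally show "f S \<phi> \<le> f (S \<union> insert x F) \<phi>" by simp
    qed
  qed
  then have "f S \<phi> \<le> f (S \<union> T) \<phi>" by blast
  then show ?thesis using sub by (simp add: sup_absorb2)
qed

lemma favg_nonneg:
  assumes prior: "is_prior p" and md: "minimal_dependency p f" and wm: "wc_monotone p f"
    and v: "valid_pr p \<psi>"
  shows "0 \<le> favg_marg p f e \<psi>"
  unfolding favg_marg_def
proof (intro divide_nonneg_pos sum_nonneg)
  show "0 < prob_cons p \<psi>" using v by (simp add: valid_pr_def)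
  fix \<phi> show "0 \<le> p \<phi> * (f (dom \<psi> \<union> {e}) \<phi> - f (dom \<psi>) \<phi>)"
  proof (cases "p \<phi> > 0")
    case True then show ?thesis using pw_mono[OF prior md wm True, of "dom \<psi>" "dom \<psi> \<union> {e}"] by (simp add: subset_insertI)
  next
    case False then have "p \<phi> = 0" using prior unfolding is_prior_def by (metis order.not_eq_order_implies_strict)
    then show ?thesis by simp
  qed
qed

lemma favg_in_dom: "e \<in> dom \<psi> \<Longrightarrow> favg_marg p f e \<psi> = 0"
  by (simp add: favg_marg_def insert_absorb)




definition condE :: "(('e::finite \<Rightarrow> 'o::finite) \<Rightarrow> real) \<Rightarrow> ('e \<rightharpoonup> 'o) \<Rightarrow> (('e \<Rightarrow> 'o) \<Rightarrow> real) \<Rightarrow> real" where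
  "condE p h g = (\<Sum>\<phi>\<in>{\<phi>. consistent \<phi> h}. p \<phi> * g \<phi>) / prob_cons p h"

lemma prior_nonneg: "is_prior p \<Longrightarrow> 0 \<le> p \<phi>" by (simp add: is_prior_def)

lemma tower:
  fixes p :: "('e::finite \<Rightarrow> 'o::finite) \<Rightarrow> real" and K :: "('e \<Rightarrow> 'o) \<Rightarrow> 'k"
    and hist :: "'k \<Rightarrow> ('e \<rightharpoonup> 'o)" and g :: "'k \<Rightarrow> ('e \<Rightarrow> 'o) \<Rightarrow> real"
  assumes prior: "is_prior p"
    and c: "\<And>\<Phi>. p \<Phi> > 0 \<Longrightarrow> consistent \<Phi> (hist (K \<Phi>))"
    and d: "\<And>\<Phi> \<Phi>'. p \<Phi> > 0 \<Longrightarrow> p \<Phi>' > 0 \<Longrightarrow> consistent \<Phi>' (hist (K \<Phi>)) \<Longrightarrow> K \<Phi>' = K \<Phi>"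
  shows "(\<Sum>\<Phi>\<in>UNIV. p \<Phi> * condE p (hist (K \<Phi>)) (g (K \<Phi>))) = (\<Sum>\<Phi>\<in>UNIV. p \<Phi> * g (K \<Phi>) \<Phi>)"
proof -
  let ?P = "\<lambda>\<Phi>. prob_cons p (hist (K \<Phi>))"
  have pos0: "\<And>\<Phi>. p \<Phi> \<noteq> 0 \<Longrightarrow> p \<Phi> > 0" using prior_nonneg[OF prior] by (metis order_le_less)
  have eq1: "p \<Phi> * condE p (hist (K \<Phi>)) (g (K \<Phi>)) =
      (\<Sum>\<Phi>'\<in>UNIV. if K \<Phi>' = K \<Phi> then p \<Phi> * p \<Phi>' * g (K \<Phi>') \<Phi>' / ?P \<Phi>' else 0)" for \<Phi>
  proof -
    have "p \<Phi> * condE p (hist (K \<Phi>)) (g (K \<Phi>)) =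
      (\<Sum>\<Phi>'\<in>UNIV. if consistent \<Phi>' (hist (K \<Phi>)) then p \<Phi> * p \<Phi>' * g (K \<Phi>) \<Phi>' / ?P \<Phi> else 0)"
      unfolding condE_def by (simp add: sum.If_cases sum_divide_distrib sum_distrib_left mult.assoc)
    also have "\<dots> = (\<Sum>\<Phi>'\<in>UNIV. if K \<Phi>' = K \<Phi> then p \<Phi> * p \<Phi>' * g (K \<Phi>') \<Phi>' / ?P \<Phi>' else 0)"
    proof (rule sum.cong[OF refl])
      fix \<Phi>' show "(if consistent \<Phi>' (hist (K \<Phi>)) then p \<Phi> * p \<Phi>' * g (K \<Phi>) \<Phi>' / ?P \<Phi> else 0) =
          (if K \<Phi>' = K \<Phi> then p \<Phi> * p \<Phi>' * g (K \<Phi>') \<Phi>' / ?P \<Phi>' else 0)"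
      proof (cases "p \<Phi> = 0 \<or> p \<Phi>' = 0")
        case True then show ?thesis by auto
      next
        case False
        then have "p \<Phi> > 0" "p \<Phi>' > 0" using pos0 by auto
        then have "consistent \<Phi>' (hist (K \<Phi>)) \<longleftrightarrow> K \<Phi>' = K \<Phi>" using c d by metis
        then show ?thesis by auto
      qed
    qed
    finally show ?thesis .
  qed
  have eq2: "(\<Sum>\<Phi>\<in>UNIV. if K \<Phi>' = K \<Phi> then p \<Phi> * p \<Phi>' * g (K \<Phi>') \<Phi>' / ?P \<Phi>' else 0) = p \<Phi>' * g (K \<Phi>') \<Phi>'"
    for \<Phi>'
  proof (cases "p \<Phi>' = 0")
    case True
    have "(\<Sum>\<Phi>\<in>UNIV. if K \<Phi>' = K \<Phi> then p \<Phi> * p \<Phi>' * g (K \<Phi>') \<Phi>' / ?P \<Phi>' else 0) = 0"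
      by (rule sum.neutral) (simp add: True)
    then show ?thesis by (simp add: True)
  next
    case False
    then have pp: "p \<Phi>' > 0" using pos0 by auto
    have Ppos: "?P \<Phi>' > 0" using valid_of[OF prior pp c[OF pp]] by (simp add: valid_pr_def)
    have "(\<Sum>\<Phi>\<in>UNIV. if K \<Phi>' = K \<Phi> then p \<Phi> else 0) = (\<Sum>\<Phi>\<in>UNIV. if consistent \<Phi> (hist (K \<Phi>')) then p \<Phi> else 0)"
    proof (rule sum.cong[OF refl])
      fix \<Phi> show "(if K \<Phi>' = K \<Phi> then p \<Phi> else 0) = (if consistent \<Phi> (hist (K \<Phi>')) then p \<Phi> else 0)"
      proof (cases "p \<Phi> = 0")
        case True then show ?thesis by simp
      next
        case False
        then have "p \<Phi> > 0" using pos0 by auto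
        then have "consistent \<Phi> (hist (K \<Phi>')) \<longleftrightarrow> K \<Phi>' = K \<Phi>" using c d pp by metis
        then show ?thesis by auto
      qed
    qed
    also have "\<dots> = ?P \<Phi>'" by (simp add: prob_cons_def sum.If_cases)
    finally have s: "(\<Sum>\<Phi>\<in>UNIV. if K \<Phi>' = K \<Phi> then p \<Phi> else 0) = ?P \<Phi>'" .
    have "(\<Sum>\<Phi>\<in>UNIV. if K \<Phi>' = K \<Phi> then p \<Phi> * p \<Phi>' * g (K \<Phi>') \<Phi>' / ?P \<Phi>' else 0)
        = (\<Sum>\<Phi>\<in>UNIV. if K \<Phi>' = K \<Phi> then p \<Phi> else 0) * (p \<Phi>' * g (K \<Phi>') \<Phi>' / ?P \<Phi>')"
      unfolding sum_distrib_right by (rule sum.cong) auto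
    also have "\<dots> = p \<Phi>' * g (K \<Phi>') \<Phi>'" using s Ppos by simp
    finally show ?thesis .
  qed
  have "(\<Sum>\<Phi>\<in>UNIV. p \<Phi> * condE p (hist (K \<Phi>)) (g (K \<Phi>))) =
      (\<Sum>\<Phi>\<in>UNIV. \<Sum>\<Phi>'\<in>UNIV. if K \<Phi>' = K \<Phi> then p \<Phi> * p \<Phi>' * g (K \<Phi>') \<Phi>' / ?P \<Phi>' else 0)"
    using eq1 by simp
  also have "\<dots> = (\<Sum>\<Phi>'\<in>UNIV. \<Sum>\<Phi>\<in>UNIV. if K \<Phi>' = K \<Phi> then p \<Phi> * p \<Phi>' * g (K \<Phi>') \<Phi>' / ?P \<Phi>' else 0)"
    by (rule sum.swap)
  also have "\<dots> = (\<Sum>\<Phi>'\<in>UNIV. p \<Phi>' * g (K \<Phi>') \<Phi>')" using eq2 by simp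
  finally show ?thesis .
qed

lemma favg_condE: "favg_marg p f e \<psi> = condE p \<psi> (\<lambda>\<phi>. f (dom \<psi> \<union> {e}) \<phi> - f (dom \<psi>) \<phi>)"
  by (simp add: favg_marg_def condE_def)

lemma condE_zero: "condE p h (\<lambda>\<phi>. 0) = 0" by (simp add: condE_def)

lemma sum_new:
  fixes R :: "nat \<Rightarrow> 'e::finite set" and E :: "nat \<Rightarrow> 'e option" and c :: "'e \<Rightarrow> real"
  assumes "R 0 = {}" "\<And>i. R (Suc i) = (case E i of None \<Rightarrow> R i | Some e \<Rightarrow> insert e (R i))"
  shows "(\<Sum>i<n. case E i of None \<Rightarrow> 0 | Some e \<Rightarrow> if e \<in> R i then 0 else c e) = (\<Sum>x\<in>R n. c x)"
proof (induction n)
  case 0 then show ?case using assms by simp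
next
  case (Suc n)
  then show ?case using assms(2)[of n]
    by (auto split: option.splits simp: insert_absorb)
qed

lemma cons_add:
  assumes "consistent \<phi> a" "consistent \<phi> b" "consistent \<phi>' (a ++ b)"
  shows "consistent \<phi>' a" "consistent \<phi>' b"
  using assms unfolding consistent_def
  by (auto simp: map_add_Some_iff dom_def split: option.splits) (metis option.inject)+

lemma cons_add2: "consistent \<phi> a \<Longrightarrow> consistent \<phi> b \<Longrightarrow> consistent \<phi> (a ++ b)"
  unfolding consistent_def by (auto simp: map_add_Some_iff dom_def split: option.splits)

lemma le_add_left: "consistent \<phi> a \<Longrightarrow> consistent \<phi> b \<Longrightarrow> a \<subseteq>\<^sub>m a ++ b"
  unfolding consistent_def map_le_def map_add_def by (auto simp: dom_def split: option.splits)




context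
  fixes p :: "('e::finite \<Rightarrow> 'o::finite) \<Rightarrow> real" and s :: "'e \<Rightarrow> ('e \<rightharpoonup> 'o) \<Rightarrow> real"
    and b :: nat and Ez :: "nat \<Rightarrow> 'e set" and q :: "nat \<Rightarrow> nat" and \<pi> :: "('e, 'o) policy"
  assumes prior: "is_prior p"
    and disj: "\<forall>z\<in>{1..b}. \<forall>z'\<in>{1..b}. z \<noteq> z' \<longrightarrow> Ez z \<inter> Ez z' = {}"
    and qb: "\<forall>z\<in>{1..b}. 1 \<le> q z \<and> q z \<le> card (Ez z)"
    and mg: "meta_greedy p s b Ez q \<pi>"
begin

abbreviation "unfilled \<psi> \<equiv> (\<exists>z\<in>{1..b}. card (dom \<psi> \<inter> Ez z) < q z)"

lemma zuniq: "z \<in> {1..b} \<Longrightarrow> z' \<in> {1..b} \<Longrightarrow> e \<in> Ez z \<Longrightarrow> e \<in> Ez z' \<Longrightarrow> z = z'"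
  using disj by blast

lemma mg_step:
  assumes "valid_pr p \<psi>"
  shows "unfilled \<psi> \<Longrightarrow> \<exists>e z. \<pi> \<psi> = Some e \<and> e \<notin> dom \<psi> \<and> z \<in> {1..b} \<and> e \<in> Ez z \<and>
            card (dom \<psi> \<inter> Ez z) < q z \<and> (\<forall>e'\<in>Ez z - dom \<psi>. s e' \<psi> \<le> s e \<psi>)"
    and "\<not> unfilled \<psi> \<Longrightarrow> \<pi> \<psi> = None"
proof -
  have m: "(if unfilled \<psi> then
         (let z = (LEAST z. z \<in> {1..b} \<and> card (dom \<psi> \<inter> Ez z) < q z) in
           \<exists>e. \<pi> \<psi> = Some e \<and> e \<in> Ez z - dom \<psi> \<and>
               (\<forall>e'\<in>Ez z - dom \<psi>. s e' \<psi> \<le> s e \<psi>))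
       else \<pi> \<psi> = None)" by (rule mg[unfolded meta_greedy_def, rule_format, OF assms])
  show "\<not> unfilled \<psi> \<Longrightarrow> \<pi> \<psi> = None" using m by simp
  assume u: "unfilled \<psi>"
  define z where "z = (LEAST z. z \<in> {1..b} \<and> card (dom \<psi> \<inter> Ez z) < q z)"
  have zp: "z \<in> {1..b} \<and> card (dom \<psi> \<inter> Ez z) < q z"
    proof -
    obtain z0 where "z0 \<in> {1..b} \<and> card (dom \<psi> \<inter> Ez z0) < q z0" using u by blast
    then show ?thesis unfolding z_def by (rule LeastI)
  qed
  have m2: "\<exists>e. \<pi> \<psi> = Some e \<and> e \<in> Ez z - dom \<psi> \<and> (\<forall>e'\<in>Ez z - dom \<psi>. s e' \<psi> \<le> s e \<psi>)"
    using m unfolding if_P[OF u] z_def[symmetric] Let_def .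
  then obtain e where e: "\<pi> \<psi> = Some e" "e \<in> Ez z" "e \<notin> dom \<psi>" "\<forall>e'\<in>Ez z - dom \<psi>. s e' \<psi> \<le> s e \<psi>"
    by blast
  show "\<exists>e z. \<pi> \<psi> = Some e \<and> e \<notin> dom \<psi> \<and> z \<in> {1..b} \<and> e \<in> Ez z \<and>
            card (dom \<psi> \<inter> Ez z) < q z \<and> (\<forall>e'\<in>Ez z - dom \<psi>. s e' \<psi> \<le> s e \<psi>)"
    apply (rule exI[of _ e], rule exI[of _ z])
    using zp e by simp
qed

lemma run_valid: "p \<phi> > 0 \<Longrightarrow> valid_pr p (run \<pi>' \<phi> j)"
  using valid_of[OF prior _ cons_run] by blast

lemma act_info:
  assumes pos: "p \<phi> > 0" and S: "\<pi> (run \<pi> \<phi> j) = Some e"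
  shows "e \<notin> dom (run \<pi> \<phi> j) \<and> (\<exists>z\<in>{1..b}. e \<in> Ez z \<and> card (dom (run \<pi> \<phi> j) \<inter> Ez z) < q z \<and>
           (\<forall>e'\<in>Ez z - dom (run \<pi> \<phi> j). s e' (run \<pi> \<phi> j) \<le> s e (run \<pi> \<phi> j)))"
proof -
  have v: "valid_pr p (run \<pi> \<phi> j)" using run_valid[OF pos] .
  have u: "unfilled (run \<pi> \<phi> j)" using mg_step(2)[OF v] S by (metis option.distinct(1))
  obtain e0 z where "\<pi> (run \<pi> \<phi> j) = Some e0 \<and> e0 \<notin> dom (run \<pi> \<phi> j) \<and> z \<in> {1..b} \<and> e0 \<in> Ez z \<and>
            card (dom (run \<pi> \<phi> j) \<inter> Ez z) < q z \<and> (\<forall>e'\<in>Ez z - dom (run \<pi> \<phi> j). s e' (run \<pi> \<phi> j) \<le> s e0 (run \<pi> \<phi> j))"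
    using mg_step(1)[OF v u] by blast
  then show ?thesis using S by auto
qed

lemma dom_run_Suc: "dom (run \<pi>' \<phi> (Suc j)) = (case \<pi>' (run \<pi>' \<phi> j) of None \<Rightarrow> dom (run \<pi>' \<phi> j) | Some e \<Rightarrow> insert e (dom (run \<pi>' \<phi> j)))"
  by (simp add: run_Suc dom_step)

lemma cnt_le:
  assumes pos: "p \<phi> > 0"
  shows "\<forall>z\<in>{1..b}. card (dom (run \<pi> \<phi> j) \<inter> Ez z) \<le> q z"
proof (induction j)
  case 0 then show ?case by simp
next
  case (Suc j)
  show ?case
  proof (cases "\<pi> (run \<pi> \<phi> j)")
    case None then show ?thesis using Suc by (simp add: dom_run_Suc)
  next
    case (Some e)
    from act_info[OF pos Some] obtain z0 where z0: "z0 \<in> {1..b}" "e \<in> Ez z0"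
      "card (dom (run \<pi> \<phi> j) \<inter> Ez z0) < q z0" and en: "e \<notin> dom (run \<pi> \<phi> j)" by blast
    show ?thesis
    proof
      fix z assume z: "z \<in> {1..b}"
      show "card (dom (run \<pi> \<phi> (Suc j)) \<inter> Ez z) \<le> q z"
      proof (cases "z = z0")
        case True
        then have "dom (run \<pi> \<phi> (Suc j)) \<inter> Ez z = insert e (dom (run \<pi> \<phi> j) \<inter> Ez z)"
          using Some z0 by (auto simp: dom_run_Suc)
        then show ?thesis using True z0 en by simp
      next
        case False
        then have "e \<notin> Ez z" using zuniq z z0 by blast
        then have "dom (run \<pi> \<phi> (Suc j)) \<inter> Ez z = dom (run \<pi> \<phi> j) \<inter> Ez z"
          using Some by (auto simp: dom_run_Suc)
        then show ?thesis using Suc z by simp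
      qed
    qed
  qed
qed

lemma dom_run_mono: "i \<le> j \<Longrightarrow> dom (run \<pi>' \<phi> i) \<subseteq> dom (run \<pi>' \<phi> j)"
  by (rule map_le_implies_dom_le[OF run_mono])

lemma filled_or_grow:
  assumes pos: "p \<phi> > 0"
  shows "j \<le> card (dom (run \<pi> \<phi> j)) \<or> \<not> unfilled (run \<pi> \<phi> j)"
proof (induction j)
  case 0 then show ?case by simp
next
  case (Suc j)
  show ?case
  proof (cases "unfilled (run \<pi> \<phi> j)")
    case False
    have "\<not> unfilled (run \<pi> \<phi> (Suc j))"
    proof
      assume "unfilled (run \<pi> \<phi> (Suc j))"
      then obtain z where z: "z \<in> {1..b}" "card (dom (run \<pi> \<phi> (Suc j)) \<inter> Ez z) < q z" by blast
      have "card (dom (run \<pi> \<phi> j) \<inter> Ez z) \<le> card (dom (run \<pi> \<phi> (Suc j)) \<inter> Ez z)"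
        using dom_run_mono[of j "Suc j" \<pi> \<phi>] by (intro card_mono) auto
      then have "card (dom (run \<pi> \<phi> j) \<inter> Ez z) < q z" using z(2) by linarith
      then show False using False z(1) by blast
    qed
    then show ?thesis by blast
  next
    case True
    then have u: "j \<le> card (dom (run \<pi> \<phi> j))" using Suc by blast
    obtain e where S: "\<pi> (run \<pi> \<phi> j) = Some e" "e \<notin> dom (run \<pi> \<phi> j)"
      using mg_step(1)[OF run_valid[OF pos] True] by blast
    then have "card (dom (run \<pi> \<phi> (Suc j))) = Suc (card (dom (run \<pi> \<phi> j)))"
      by (simp add: dom_run_Suc)
    then show ?thesis using u by simp
  qed
qed


lemma final_filled:
  assumes pos: "p \<phi> > 0" and z: "z \<in> {1..b}"
  shows "card (dom (run \<pi> \<phi> (card (UNIV::'e set))) \<inter> Ez z) = q z"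
proof -
  have nu: "\<not> unfilled (run \<pi> \<phi> (card (UNIV::'e set)))"
  proof (cases "(card (UNIV::'e set)) \<le> card (dom (run \<pi> \<phi> (card (UNIV::'e set))))")
    case True
    then have "dom (run \<pi> \<phi> (card (UNIV::'e set))) = UNIV" using card_seteq[OF finite_UNIV subset_UNIV] by blast
    then show ?thesis using qb by (metis inf_top_left not_le)
  next
    case False then show ?thesis using filled_or_grow[OF pos, of "card (UNIV::'e set)"] by blast
  qed
  then have "card (dom (run \<pi> \<phi> (card (UNIV::'e set))) \<inter> Ez z) \<ge> q z" using z by (meson not_le)
  moreover have "card (dom (run \<pi> \<phi> (card (UNIV::'e set))) \<inter> Ez z) \<le> q z" using cnt_le[OF pos] z by blast
  ultimately show ?thesis by linarith
qed

definition act :: "('e \<Rightarrow> 'o) \<Rightarrow> nat \<Rightarrow> nat \<Rightarrow> bool" where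
  "act \<phi> j z \<longleftrightarrow> (\<exists>e. \<pi> (run \<pi> \<phi> j) = Some e \<and> e \<in> Ez z)"

lemma count_act:
  assumes pos: "p \<phi> > 0"
  shows "card {j. j < n \<and> act \<phi> j z} = card (dom (run \<pi> \<phi> n) \<inter> Ez z)"
proof (induction n)
  case 0 then show ?case by simp
next
  case (Suc n)
  show ?case
  proof (cases "\<pi> (run \<pi> \<phi> n)")
    case None
    then have "{j. j < Suc n \<and> act \<phi> j z} = {j. j < n \<and> act \<phi> j z}"
      by (auto simp: act_def less_Suc_eq)
    then show ?thesis using Suc None by (simp add: dom_run_Suc)
  next
    case (Some e)
    have en: "e \<notin> dom (run \<pi> \<phi> n)" using act_info[OF pos Some] by blast
    show ?thesis
    proof (cases "e \<in> Ez z")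
      case True
      then have "{j. j < Suc n \<and> act \<phi> j z} = insert n {j. j < n \<and> act \<phi> j z}"
        using Some by (auto simp: act_def less_Suc_eq)
      moreover have "dom (run \<pi> \<phi> (Suc n)) \<inter> Ez z = insert e (dom (run \<pi> \<phi> n) \<inter> Ez z)"
        using Some True by (auto simp: dom_run_Suc)
      ultimately show ?thesis using Suc en by simp
    next
      case False
      then have "{j. j < Suc n \<and> act \<phi> j z} = {j. j < n \<and> act \<phi> j z}"
        using Some by (auto simp: act_def less_Suc_eq)
      moreover have "dom (run \<pi> \<phi> (Suc n)) \<inter> Ez z = dom (run \<pi> \<phi> n) \<inter> Ez z"
        using Some False by (auto simp: dom_run_Suc)
      ultimately show ?thesis using Suc by simp
    qed
  qed
qed

definition sc :: "('e \<Rightarrow> 'o) \<Rightarrow> nat \<Rightarrow> real" where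
  "sc \<phi> j = (case \<pi> (run \<pi> \<phi> j) of None \<Rightarrow> 0 | Some e \<Rightarrow> s e (run \<pi> \<phi> j))"

lemma greedy_bound:
  fixes k :: "nat \<Rightarrow> nat" and C :: real
  assumes pos: "p \<phi> > 0"
    and snn: "\<forall>\<psi> e. valid_pr p \<psi> \<longrightarrow> e \<notin> dom \<psi> \<longrightarrow> 0 \<le> s e \<psi>"
    and kC: "\<forall>z\<in>{1..b}. real (k z) \<le> C * real (q z)" and C0: "0 \<le> C"
  shows "\<exists>c. (\<forall>z\<in>{1..b}. 0 \<le> c z) \<and>
     (\<forall>z\<in>{1..b}. \<forall>x\<in>Ez z. x \<notin> dom (run \<pi> \<phi> (card (UNIV::'e set))) \<longrightarrow>
         (\<forall>v. (\<forall>j<(card (UNIV::'e set)). act \<phi> j z \<longrightarrow> v \<le> s x (run \<pi> \<phi> j)) \<longrightarrow> v \<le> c z)) \<and>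
     (\<Sum>z\<in>{1..b}. real (k z) * c z) \<le> C * (\<Sum>j<(card (UNIV::'e set)). sc \<phi> j)"
proof -
  let ?R = "\<lambda>z. {j. j < (card (UNIV::'e set)) \<and> act \<phi> j z}"
  define c where "c z = (\<Sum>j\<in>?R z. sc \<phi> j) / real (q z)" for z
  have scnn: "0 \<le> sc \<phi> j" for j
  proof (cases "\<pi> (run \<pi> \<phi> j)")
    case None then show ?thesis by (simp add: sc_def)
  next
    case (Some e)
    then show ?thesis using act_info[OF pos Some] snn run_valid[OF pos] by (simp add: sc_def)
  qed
  have cardR: "card (?R z) = q z" if "z \<in> {1..b}" for z
    using count_act[OF pos] final_filled[OF pos that] by simp
  have c0: "\<forall>z\<in>{1..b}. 0 \<le> c z" unfolding c_def using scnn by (simp add: sum_nonneg)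
  have c1: "v \<le> c z" if z: "z \<in> {1..b}" and x: "x \<in> Ez z" "x \<notin> dom (run \<pi> \<phi> (card (UNIV::'e set)))"
      and hv: "\<forall>j<(card (UNIV::'e set)). act \<phi> j z \<longrightarrow> v \<le> s x (run \<pi> \<phi> j)" for z x v
  proof -
    have "v \<le> sc \<phi> j" if j: "j \<in> ?R z" for j
    proof -
      from j obtain e where S: "\<pi> (run \<pi> \<phi> j) = Some e" "e \<in> Ez z" and jN: "j < (card (UNIV::'e set))" by (auto simp: act_def)
      from act_info[OF pos S(1)] obtain z0 where z0: "z0 \<in> {1..b}" "e \<in> Ez z0"
        "\<forall>e'\<in>Ez z0 - dom (run \<pi> \<phi> j). s e' (run \<pi> \<phi> j) \<le> s e (run \<pi> \<phi> j)" by blast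
      have "z0 = z" using zuniq z0 z S by blast
      moreover have "x \<notin> dom (run \<pi> \<phi> j)" using x dom_run_mono[of j "card (UNIV::'e set)" \<pi> \<phi>] jN by auto
      ultimately have "s x (run \<pi> \<phi> j) \<le> s e (run \<pi> \<phi> j)" using z0 x by blast
      moreover have "v \<le> s x (run \<pi> \<phi> j)" using hv jN j by blast
      ultimately show ?thesis using S by (simp add: sc_def)
    qed
    then have "(\<Sum>j\<in>?R z. v) \<le> (\<Sum>j\<in>?R z. sc \<phi> j)" by (intro sum_mono) auto
    then have "real (q z) * v \<le> (\<Sum>j\<in>?R z. sc \<phi> j)" using cardR[OF z] by simp
    moreover have "q z \<ge> 1" using qb z by blast
    ultimately show ?thesis unfolding c_def by (simp add: field_simps)
  qed
  have c2: "(\<Sum>z\<in>{1..b}. real (k z) * c z) \<le> C * (\<Sum>j<(card (UNIV::'e set)). sc \<phi> j)"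
  proof -
    have "(\<Sum>z\<in>{1..b}. real (k z) * c z) \<le> (\<Sum>z\<in>{1..b}. C * (\<Sum>j\<in>?R z. sc \<phi> j))"
    proof (intro sum_mono)
      fix z assume z: "z \<in> {1..b}"
      have q1: "q z \<ge> 1" using qb z by blast
      have "real (k z) * c z \<le> C * real (q z) * c z" using kC z c0 by (intro mult_right_mono) auto
      also have "\<dots> = C * (\<Sum>j\<in>?R z. sc \<phi> j)" using q1 by (simp add: c_def)
      finally show "real (k z) * c z \<le> C * (\<Sum>j\<in>?R z. sc \<phi> j)" .
    qed
    also have "\<dots> = C * (\<Sum>z\<in>{1..b}. \<Sum>j\<in>?R z. sc \<phi> j)" by (simp add: sum_distrib_left)
    also have "\<dots> = C * (\<Sum>j<(card (UNIV::'e set)). sc \<phi> j)"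
    proof -
    have SS: "(\<Sum>z\<in>{1..b}. \<Sum>j\<in>?R z. sc \<phi> j) = (\<Sum>j<(card (UNIV::'e set)). sc \<phi> j)"
    proof -
    have "(\<Sum>z\<in>{1..b}. \<Sum>j\<in>?R z. sc \<phi> j) = (\<Sum>z\<in>{1..b}. \<Sum>j<(card (UNIV::'e set)). if act \<phi> j z then sc \<phi> j else 0)"
    proof (rule sum.cong[OF refl])
      fix z assume "z \<in> {1..b}"
      have "?R z = {..<card (UNIV::'e set)} \<inter> {j. act \<phi> j z}" by auto
      then show "(\<Sum>j\<in>?R z. sc \<phi> j) = (\<Sum>j<card (UNIV::'e set). if act \<phi> j z then sc \<phi> j else 0)"
        by (simp add: sum.If_cases)
    qed
    also have "\<dots> = (\<Sum>j<(card (UNIV::'e set)). \<Sum>z\<in>{1..b}. if act \<phi> j z then sc \<phi> j else 0)" by (rule sum.swap)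
    also have "\<dots> = (\<Sum>j<(card (UNIV::'e set)). sc \<phi> j)"
    proof (intro sum.cong refl)
      fix j assume "j \<in> {..<card (UNIV::'e set)}"
      show "(\<Sum>z\<in>{1..b}. if act \<phi> j z then sc \<phi> j else 0) = sc \<phi> j"
      proof (cases "\<pi> (run \<pi> \<phi> j)")
        case None then show ?thesis by (simp add: act_def sc_def)
      next
        case (Some e)
        from act_info[OF pos Some] obtain z0 where z0: "z0 \<in> {1..b}" "e \<in> Ez z0" by blast
        have "(\<Sum>z\<in>{1..b}. if act \<phi> j z then sc \<phi> j else 0) = (\<Sum>z\<in>{1..b}. if z = z0 then sc \<phi> j else 0)"
          using zuniq z0 Some by (intro sum.cong refl) (auto simp: act_def)
        also have "\<dots> = sc \<phi> j" using z0 by simp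
        finally show ?thesis .
      qed
    qed
    finally show ?thesis .
    qed
    then show ?thesis by simp
    qed
    finally show ?thesis .
  qed
  show ?thesis using c0 c1 c2 by blast
qed

end




definition zof :: "nat \<Rightarrow> (nat \<Rightarrow> 'e set) \<Rightarrow> 'e \<Rightarrow> nat" where
  "zof b Ez x = (SOME z. z \<in> {1..b} \<and> x \<in> Ez z)"

lemma zof:
  assumes cover: "(\<Union>z\<in>{1..b}. Ez z) = UNIV"
  shows "zof b Ez x \<in> {1..b} \<and> x \<in> Ez (zof b Ez x)"
proof -
  have "\<exists>z. z \<in> {1..b} \<and> x \<in> Ez z" using cover by blast
  then show ?thesis unfolding zof_def by (rule someI_ex)
qed

lemma zof_eq:
  assumes cover: "(\<Union>z\<in>{1..b}. Ez z) = UNIV"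
    and disj: "\<forall>z\<in>{1..b}. \<forall>z'\<in>{1..b}. z \<noteq> z' \<longrightarrow> Ez z \<inter> Ez z' = {}"
    and z: "z \<in> {1..b}" "x \<in> Ez z"
  shows "zof b Ez x = z"
  using zof[OF cover, of x] disj z by blast

lemma part_sum:
  fixes S :: "'e::finite set" and h :: "nat \<Rightarrow> real"
  assumes cover: "(\<Union>z\<in>{1..b}. Ez z) = UNIV"
    and disj: "\<forall>z\<in>{1..b}. \<forall>z'\<in>{1..b}. z \<noteq> z' \<longrightarrow> Ez z \<inter> Ez z' = {}"
  shows "(\<Sum>x\<in>S. h (zof b Ez x)) = (\<Sum>z\<in>{1..b}. real (card (S \<inter> Ez z)) * h z)"
proof -
  have S: "S = (\<Union>z\<in>{1..b}. S \<inter> Ez z)" using cover by blast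
  have "(\<Sum>x\<in>S. h (zof b Ez x)) = (\<Sum>z\<in>{1..b}. \<Sum>x\<in>S \<inter> Ez z. h (zof b Ez x))"
    apply (subst S)
    apply (rule sum.UNION_disjoint)
    using disj by auto
  also have "\<dots> = (\<Sum>z\<in>{1..b}. \<Sum>x\<in>S \<inter> Ez z. h z)"
    by (rule sum.cong[OF refl], rule sum.cong[OF refl]) (use zof_eq[OF cover disj] in auto)
  also have "\<dots> = (\<Sum>z\<in>{1..b}. real (card (S \<inter> Ez z)) * h z)" by simp
  finally show ?thesis .
qed

definition pick :: "(('e::finite \<Rightarrow> 'o::finite) \<Rightarrow> real) \<Rightarrow> ('e set \<Rightarrow> ('e \<Rightarrow> 'o) \<Rightarrow> real) \<Rightarrow> 'e \<Rightarrow> ('e \<rightharpoonup> 'o) \<Rightarrow> 'o" where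
  "pick p f e h = (if e \<in> dom h then the (h e) else
     (SOME x. x \<in> states_at p e h \<and> (\<forall>y\<in>states_at p e h.
        cond_f p f (dom h \<union> {e}) (h(e \<mapsto> x)) - cond_f p f (dom h) h \<le>
        cond_f p f (dom h \<union> {e}) (h(e \<mapsto> y)) - cond_f p f (dom h) h)))"

lemma pick_prop:
  assumes prior: "is_prior p" and v: "valid_pr p h" and e: "e \<notin> dom h"
  shows "pick p f e h \<in> states_at p e h \<and>
    cond_f p f (dom h \<union> {e}) (h(e \<mapsto> pick p f e h)) - cond_f p f (dom h) h = fwc_marg p f e h"
proof -
  let ?S = "states_at p e h"
  let ?M = "\<lambda>x. cond_f p f (dom h \<union> {e}) (h(e \<mapsto> x)) - cond_f p f (dom h) h"
  have ne: "?S \<noteq> {}" using states_at_ne[OF prior v] .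
  have fin: "finite (?M ` ?S)" by simp
  have "Min (?M ` ?S) \<in> ?M ` ?S" using ne fin by (intro Min_in) auto
  then obtain x where x: "x \<in> ?S" "?M x = Min (?M ` ?S)" by auto
  have "\<forall>y\<in>?S. ?M x \<le> ?M y" using x fin by simp
  then have ex: "\<exists>x. x \<in> ?S \<and> (\<forall>y\<in>?S. ?M x \<le> ?M y)" using x by blast
  have P: "pick p f e h \<in> ?S \<and> (\<forall>y\<in>?S. ?M (pick p f e h) \<le> ?M y)"
    unfolding pick_def using e someI_ex[OF ex] by simp
  have "?M (pick p f e h) = Min (?M ` ?S)"
  proof (rule antisym)
    show "?M (pick p f e h) \<le> Min (?M ` ?S)" using P fin ne by (subst Min_ge_iff) auto
    show "Min (?M ` ?S) \<le> ?M (pick p f e h)" using P fin by (intro Min_le) auto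
  qed
  then show ?thesis using P by (simp add: fwc_marg_def)
qed

primrec adv :: "('e, 'o) policy \<Rightarrow> ('e \<Rightarrow> ('e \<rightharpoonup> 'o) \<Rightarrow> 'o) \<Rightarrow> ('e \<rightharpoonup> 'o) \<Rightarrow> nat \<Rightarrow> ('e \<rightharpoonup> 'o)" where
  "adv \<pi> P G 0 = Map.empty"
| "adv \<pi> P G (Suc i) = (case \<pi> (adv \<pi> P G i) of None \<Rightarrow> adv \<pi> P G i
     | Some e \<Rightarrow> if e \<in> dom (adv \<pi> P G i) then adv \<pi> P G i else (adv \<pi> P G i)(e \<mapsto> P e (G ++ adv \<pi> P G i)))"

lemma adv_mono_Suc: "adv \<pi> P G i \<subseteq>\<^sub>m adv \<pi> P G (Suc i)"
proof (cases "\<pi> (adv \<pi> P G i)")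
  case None then show ?thesis by simp
next
  case (Some e) then show ?thesis by (auto simp add: map_le_def dom_def)
qed

lemma adv_mono: "i \<le> j \<Longrightarrow> adv \<pi> P G i \<subseteq>\<^sub>m adv \<pi> P G j"
proof (induction j)
  case 0 then show ?case by simp
next
  case (Suc j)
  show ?case
  proof (cases "i = Suc j")
    case False
    then have "i \<le> j" using Suc.prems by simp
    then show ?thesis using Suc.IH adv_mono_Suc[of \<pi> P G j] map_le_trans by blast
  qed simp
qed

lemma dom_adv_Suc: "dom (adv \<pi> P G (Suc i)) = (case \<pi> (adv \<pi> P G i) of None \<Rightarrow> dom (adv \<pi> P G i) | Some e \<Rightarrow> insert e (dom (adv \<pi> P G i)))"
  by (cases "\<pi> (adv \<pi> P G i)") auto




lemma wc_part:
  fixes p :: "('e::finite \<Rightarrow> 'o::finite) \<Rightarrow> real"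
    and f :: "'e set \<Rightarrow> ('e \<Rightarrow> 'o) \<Rightarrow> real"
    and b :: nat and Ez :: "nat \<Rightarrow> 'e set" and k q :: "nat \<Rightarrow> nat"
    and \<pi>w \<pi>s :: "('e, 'o) policy" and C :: real
  assumes prior: "is_prior p"
    and disj: "\<forall>z\<in>{1..b}. \<forall>z'\<in>{1..b}. z \<noteq> z' \<longrightarrow> Ez z \<inter> Ez z' = {}"
    and cover: "(\<Union>z\<in>{1..b}. Ez z) = UNIV"
    and qb: "\<forall>z\<in>{1..b}. 1 \<le> q z \<and> q z \<le> card (Ez z)"
    and mg: "meta_greedy p (fwc_marg p f) b Ez q \<pi>w"
    and nonneg: "\<forall>S \<phi>. 0 \<le> f S \<phi>"
    and wcmono: "wc_monotone p f"
    and wcsub: "wc_submodular p f"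
    and mindep: "minimal_dependency p f"
    and kC: "\<forall>z\<in>{1..b}. real (k z) \<le> C * real (q z)" and C0: "0 \<le> C"
    and feas: "feasible_policy p b Ez k \<pi>s"
    and pos: "p \<phi> > 0"
  shows "fwc_pol p f (sel \<pi>s) \<le> (1 + C) * f (dom (run \<pi>w \<phi> (card (UNIV::'e set)))) \<phi>"
proof -
  define N where "N = card (UNIV::'e set)"
  define G where "G = run \<pi>w \<phi> N"
  have cG: "consistent \<phi> G" unfolding G_def by (rule cons_run)
  have vG: "valid_pr p G" using valid_of[OF prior pos cG] .
  have snn: "\<forall>\<psi> e. valid_pr p \<psi> \<longrightarrow> e \<notin> dom \<psi> \<longrightarrow> 0 \<le> fwc_marg p f e \<psi>"
    using wcmono by (simp add: wc_monotone_def)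
  obtain c where c0: "\<forall>z\<in>{1..b}. 0 \<le> c z"
    and c1: "\<forall>z\<in>{1..b}. \<forall>x\<in>Ez z. x \<notin> dom G \<longrightarrow>
         (\<forall>v. (\<forall>j<N. act Ez \<pi>w \<phi> j z \<longrightarrow> v \<le> fwc_marg p f x (run \<pi>w \<phi> j)) \<longrightarrow> v \<le> c z)"
    and c2: "(\<Sum>z\<in>{1..b}. real (k z) * c z) \<le> C * (\<Sum>j<N. sc (fwc_marg p f) \<pi>w \<phi> j)"
    using greedy_bound[OF prior disj qb mg pos snn kC C0] unfolding G_def N_def by blast
  have actD: "act Ez \<pi>w \<phi> j z \<longleftrightarrow> (\<exists>e. \<pi>w (run \<pi>w \<phi> j) = Some e \<and> e \<in> Ez z)" for j z
    by (rule act_def[OF prior disj qb mg])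
  have scD: "sc (fwc_marg p f) \<pi>w \<phi> j = (case \<pi>w (run \<pi>w \<phi> j) of None \<Rightarrow> 0 | Some e \<Rightarrow> fwc_marg p f e (run \<pi>w \<phi> j))" for j
    by (rule sc_def[OF prior disj qb mg])
  have sc_le: "sc (fwc_marg p f) \<pi>w \<phi> j \<le> f (dom (run \<pi>w \<phi> (Suc j))) \<phi> - f (dom (run \<pi>w \<phi> j)) \<phi>" for j
  proof (cases "\<pi>w (run \<pi>w \<phi> j)")
    case None then show ?thesis by (simp add: scD run_Suc dom_step)
  next
    case (Some e)
    have "fwc_marg p f e (run \<pi>w \<phi> j) \<le> f (dom (run \<pi>w \<phi> j) \<union> {e}) \<phi> - f (dom (run \<pi>w \<phi> j)) \<phi>"
      by (rule fwc_le_actual[OF prior mindep pos cons_run])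
    then show ?thesis using Some by (simp add: scD run_Suc dom_step)
  qed
  have sumsc: "(\<Sum>j<N. sc (fwc_marg p f) \<pi>w \<phi> j) \<le> f (dom G) \<phi>"
  proof -
    have "(\<Sum>j<N. sc (fwc_marg p f) \<pi>w \<phi> j) \<le> (\<Sum>j<N. f (dom (run \<pi>w \<phi> (Suc j))) \<phi> - f (dom (run \<pi>w \<phi> j)) \<phi>)"
      by (intro sum_mono sc_le)
    also have "\<dots> = f (dom G) \<phi> - f (dom (run \<pi>w \<phi> 0)) \<phi>"
      unfolding G_def by (rule sum_lessThan_telescope)
    also have "\<dots> \<le> f (dom G) \<phi>" using nonneg by simp
    finally show ?thesis .
  qed
  define P where "P = pick p f"
  define A where "A = adv \<pi>s P G"
  have inv: "valid_pr p (G ++ A i) \<and> (\<forall>x\<in>dom G \<inter> dom (A i). A i x = G x)" for i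
  proof (induction i)
    case 0 then show ?case using vG by (simp add: A_def)
  next
    case (Suc i)
    then have vi: "valid_pr p (G ++ A i)" and ag: "\<forall>x\<in>dom G \<inter> dom (A i). A i x = G x" by auto
    show ?case
    proof (cases "\<pi>s (A i)")
      case None then show ?thesis using Suc by (simp add: A_def)
    next
      case (Some e)
      show ?thesis
      proof (cases "e \<in> dom (A i)")
        case True then show ?thesis using Suc Some by (simp add: A_def)
      next
        case False
        have Ai: "A (Suc i) = (A i)(e \<mapsto> P e (G ++ A i))" using Some False by (simp add: A_def)
        show ?thesis
        proof (cases "e \<in> dom G")
          case True
          have he: "(G ++ A i) e = G e" using False by (simp add: map_add_def domIff split: option.splits)
          then have Pe: "P e (G ++ A i) = the (G e)" using True by (simp add: P_def pick_def)
          have "G ++ A (Suc i) = (G ++ A i)(e \<mapsto> the (G e))" using Ai Pe by simp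
          also have "\<dots> = G ++ A i" using he True by (auto simp: fun_upd_idem_iff)
          finally have "G ++ A (Suc i) = G ++ A i" .
          moreover have "\<forall>x\<in>dom G \<inter> dom (A (Suc i)). A (Suc i) x = G x"
            using ag Ai Pe True by (auto simp: domIff)
          ultimately show ?thesis using vi by simp
        next
          case eG: False
          have en: "e \<notin> dom (G ++ A i)" using eG False by simp
          have pk: "P e (G ++ A i) \<in> states_at p e (G ++ A i)"
            using pick_prop[OF prior vi en] by (simp add: P_def)
          then obtain \<phi>1 where \<phi>1: "p \<phi>1 > 0" "consistent \<phi>1 (G ++ A i)" "\<phi>1 e = P e (G ++ A i)"
            using states_at_iff[OF prior vi] by blast
          have "consistent \<phi>1 ((G ++ A i)(e \<mapsto> P e (G ++ A i)))"
            using cons_upd[OF \<phi>1(2), of e] \<phi>1(3) by simp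
          then have "valid_pr p (G ++ A (Suc i))" using valid_of[OF prior \<phi>1(1)] Ai by simp
          moreover have "\<forall>x\<in>dom G \<inter> dom (A (Suc i)). A (Suc i) x = G x"
            using ag Ai eG by auto
          ultimately show ?thesis by simp
        qed
      qed
    qed
  qed
  have GleA: "G \<subseteq>\<^sub>m G ++ A i" for i
    unfolding map_le_def
  proof
    fix x assume x: "x \<in> dom G"
    show "G x = (G ++ A i) x"
    proof (cases "A i x")
      case None then show ?thesis by (simp add: map_add_def)
    next
      case (Some y)
      then have "A i x = G x" using inv[of i] x by blast
      then show ?thesis using Some by (simp add: map_add_def split: option.splits)
    qed
  qed
  define T where "T i = cond_f p f (dom (G ++ A i)) (G ++ A i)" for i
  define cc where "cc x = (if x \<in> dom G then 0 else c (zof b Ez x))" for x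
  define w where "w i = (case \<pi>s (A i) of None \<Rightarrow> 0 | Some e \<Rightarrow> if e \<in> dom (A i) then 0 else cc e)" for i
  have step: "T (Suc i) - T i \<le> w i" for i
  proof (cases "\<pi>s (A i)")
    case None then show ?thesis by (simp add: A_def T_def w_def)
  next
    case (Some e)
    show ?thesis
    proof (cases "e \<in> dom (A i)")
      case True then show ?thesis using Some by (simp add: A_def T_def w_def)
    next
      case False
      have Ai: "A (Suc i) = (A i)(e \<mapsto> P e (G ++ A i))" using Some False by (simp add: A_def)
      have vi: "valid_pr p (G ++ A i)" using inv by blast
      show ?thesis
      proof (cases "e \<in> dom G")
        case True
        have he: "(G ++ A i) e = G e" using False by (simp add: map_add_def domIff split: option.splits)
        then have Pe: "P e (G ++ A i) = the (G e)" using True by (simp add: P_def pick_def)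
        have "G ++ A (Suc i) = (G ++ A i)(e \<mapsto> the (G e))" using Ai Pe by simp
        also have "\<dots> = G ++ A i" using he True by (auto simp: fun_upd_idem_iff)
        finally have "G ++ A (Suc i) = G ++ A i" .
        then show ?thesis using Some False True by (simp add: T_def w_def cc_def)
      next
        case eG: False
        have en: "e \<notin> dom (G ++ A i)" using eG False by simp
        have "T (Suc i) - T i = fwc_marg p f e (G ++ A i)"
          using pick_prop[OF prior vi en, of f] Ai unfolding T_def P_def by simp
        also have "\<dots> \<le> c (zof b Ez e)"
        proof -
          let ?z = "zof b Ez e"
          have z: "?z \<in> {1..b}" "e \<in> Ez ?z" using zof[OF cover] by auto
          have "\<forall>j<N. act Ez \<pi>w \<phi> j ?z \<longrightarrow> fwc_marg p f e (G ++ A i) \<le> fwc_marg p f e (run \<pi>w \<phi> j)"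
          proof (intro allI impI)
            fix j assume j: "j < N"
            have vj: "valid_pr p (run \<pi>w \<phi> j)" using valid_of[OF prior pos cons_run] .
            have "run \<pi>w \<phi> j \<subseteq>\<^sub>m G" unfolding G_def using j by (intro run_mono) simp
            then have le: "run \<pi>w \<phi> j \<subseteq>\<^sub>m G ++ A i" using GleA[of i] by (rule map_le_trans)
            show "fwc_marg p f e (G ++ A i) \<le> fwc_marg p f e (run \<pi>w \<phi> j)"
              by (rule wcsub[unfolded wc_submodular_def, rule_format, OF conjI[OF vj conjI[OF vi conjI[OF le en]]]])
          qed
          then show ?thesis using c1 z eG by blast
        qed
        finally show ?thesis using Some False eG by (simp add: w_def cc_def)
      qed
    qed
  qed
  have sumw: "(\<Sum>i<N. w i) = (\<Sum>x\<in>dom (A N). cc x)"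
    unfolding w_def by (rule sum_new) (simp_all only: A_def dom_adv_Suc adv.simps(1) dom_empty)
  have vN: "valid_pr p (G ++ A N)" using inv by blast
  obtain \<phi>' where \<phi>': "p \<phi>' > 0" "consistent \<phi>' (G ++ A N)" using valid_ex[OF prior vN] by blast
  have runA: "i \<le> N \<Longrightarrow> run \<pi>s \<phi>' i = A i" for i
  proof (induction i)
    case 0 then show ?case by (simp add: A_def)
  next
    case (Suc i)
    then have IH: "run \<pi>s \<phi>' i = A i" by simp
    show ?case
    proof (cases "\<pi>s (A i)")
      case None then show ?thesis by (simp add: run_Suc IH policy_step_def A_def)
    next
      case (Some e)
      show ?thesis
      proof (cases "e \<in> dom (A i)")
        case True then show ?thesis using Some by (simp add: run_Suc IH policy_step_def A_def)
      next
        case False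
        have Ai: "A (Suc i) e = Some (P e (G ++ A i))" using Some False by (simp add: A_def)
        have "A (Suc i) \<subseteq>\<^sub>m A N" unfolding A_def using adv_mono Suc.prems by blast
        then have "A N e = Some (P e (G ++ A i))" using Ai by (metis domI map_le_def)
        then have "(G ++ A N) e = Some (P e (G ++ A i))" by simp
        then have "\<phi>' e = P e (G ++ A i)" using \<phi>'(2) unfolding consistent_def by (metis domI option.inject)
        then show ?thesis using Some False by (simp add: run_Suc IH policy_step_def A_def)
      qed
    qed
  qed
  have selS: "sel \<pi>s \<phi>' = dom (A N)" using runA[of N] by (simp add: sel_def final_obs_run N_def)
  have "fwc_pol p f (sel \<pi>s) \<le> f (sel \<pi>s \<phi>') \<phi>'"
    unfolding fwc_pol_def using \<phi>'(1) by (intro Min_le) auto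
  also have "\<dots> \<le> f (dom (G ++ A N)) \<phi>'"
    using pw_mono[OF prior mindep wcmono \<phi>'(1)] selS by simp
  also have "\<dots> = T N" unfolding T_def using mindep vN \<phi>' unfolding minimal_dependency_def by metis
  also have "T N = T 0 + (\<Sum>i<N. T (Suc i) - T i)" by (simp add: sum_lessThan_telescope)
  also have "T 0 = f (dom G) \<phi>" unfolding T_def using mindep vG pos cG
    unfolding minimal_dependency_def by (simp add: A_def)
  also have "(\<Sum>i<N. T (Suc i) - T i) \<le> (\<Sum>i<N. w i)" by (intro sum_mono step)
  also have "\<dots> = (\<Sum>x\<in>dom (A N). cc x)" by (rule sumw)
  also have "\<dots> \<le> (\<Sum>x\<in>dom (A N). c (zof b Ez x))"
    unfolding cc_def using c0 zof[OF cover] by (intro sum_mono) auto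
  also have "\<dots> = (\<Sum>z\<in>{1..b}. real (card (dom (A N) \<inter> Ez z)) * c z)" by (rule part_sum[OF cover disj])
  also have "\<dots> \<le> (\<Sum>z\<in>{1..b}. real (k z) * c z)"
  proof (intro sum_mono mult_right_mono)
    fix z assume z: "z \<in> {1..b}"
    have "pm_indep b Ez k (sel \<pi>s \<phi>')" using feas \<phi>'(1) by (simp add: feasible_policy_def)
    then show "real (card (dom (A N) \<inter> Ez z)) \<le> real (k z)" using z selS by (simp add: pm_indep_def)
    show "0 \<le> c z" using c0 z by blast
  qed
  also have "\<dots> \<le> C * (\<Sum>j<N. sc (fwc_marg p f) \<pi>w \<phi> j)" by (rule c2)
  also have "\<dots> \<le> C * f (dom G) \<phi>" using sumsc C0 by (intro mult_left_mono)
  finally show ?thesis by (simp add: G_def N_def algebra_simps)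
qed




lemma wsum_mono:
  assumes prior: "is_prior p" and h: "\<And>\<Phi>. p \<Phi> > 0 \<Longrightarrow> x \<Phi> \<le> y \<Phi>"
  shows "(\<Sum>\<Phi>\<in>UNIV. p \<Phi> * x \<Phi>) \<le> (\<Sum>\<Phi>\<in>UNIV. p \<Phi> * y \<Phi>)"
proof (rule sum_mono)
  fix \<Phi> :: "'a \<Rightarrow> 'b"
  show "p \<Phi> * x \<Phi> \<le> p \<Phi> * y \<Phi>"
  proof (cases "p \<Phi> > 0")
    case True then show ?thesis using h[OF True] by (simp add: mult_left_mono)
  next
    case False then have "p \<Phi> = 0" using prior_nonneg[OF prior, of \<Phi>] by simp
    then show ?thesis by simp
  qed
qed

lemma avg_part:
  fixes p :: "('e::finite \<Rightarrow> 'o::finite) \<Rightarrow> real"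
    and f :: "'e set \<Rightarrow> ('e \<Rightarrow> 'o) \<Rightarrow> real"
    and b :: nat and Ez :: "nat \<Rightarrow> 'e set" and k q :: "nat \<Rightarrow> nat"
    and \<pi>a \<pi>s :: "('e, 'o) policy" and C :: real
  assumes prior: "is_prior p"
    and disj: "\<forall>z\<in>{1..b}. \<forall>z'\<in>{1..b}. z \<noteq> z' \<longrightarrow> Ez z \<inter> Ez z' = {}"
    and cover: "(\<Union>z\<in>{1..b}. Ez z) = UNIV"
    and qb: "\<forall>z\<in>{1..b}. 1 \<le> q z \<and> q z \<le> card (Ez z)"
    and mg: "meta_greedy p (favg_marg p f) b Ez q \<pi>a"
    and nonneg: "\<forall>S \<phi>. 0 \<le> f S \<phi>"
    and wcmono: "wc_monotone p f"
    and adsub: "adaptive_submodular p f"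
    and mindep: "minimal_dependency p f"
    and kC: "\<forall>z\<in>{1..b}. real (k z) \<le> C * real (q z)" and C0: "0 \<le> C"
    and feas: "feasible_policy p b Ez k \<pi>s"
  shows "favg_pol p f (sel \<pi>s) \<le> (1 + C) * (\<Sum>\<Phi>\<in>UNIV. p \<Phi> * f (dom (run \<pi>a \<Phi> (card (UNIV::'e set)))) \<Phi>)"
proof -
  define N where "N = card (UNIV::'e set)"
  define G where "G \<Phi> = run \<pi>a \<Phi> N" for \<Phi>
  define EG where "EG = (\<Sum>\<Phi>\<in>UNIV. p \<Phi> * f (dom (G \<Phi>)) \<Phi>)"
  have snn: "\<forall>\<psi> e. valid_pr p \<psi> \<longrightarrow> e \<notin> dom \<psi> \<longrightarrow> 0 \<le> favg_marg p f e \<psi>"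
    using favg_nonneg[OF prior mindep wcmono] by blast
  define prp where "prp \<Phi> c \<longleftrightarrow> (\<forall>z\<in>{1..b}. 0 \<le> c z) \<and>
     (\<forall>z\<in>{1..b}. \<forall>x\<in>Ez z. x \<notin> dom (G \<Phi>) \<longrightarrow>
         (\<forall>v. (\<forall>j<N. act Ez \<pi>a \<Phi> j z \<longrightarrow> v \<le> favg_marg p f x (run \<pi>a \<Phi> j)) \<longrightarrow> v \<le> c z)) \<and>
     (\<Sum>z\<in>{1..b}. real (k z) * c z) \<le> C * (\<Sum>j<N. sc (favg_marg p f) \<pi>a \<Phi> j)" for \<Phi> c
  define cf where "cf \<Phi> = (SOME c. prp \<Phi> c)" for \<Phi>
  have cfp: "prp \<Phi> (cf \<Phi>)" if pos: "p \<Phi> > 0" for \<Phi>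
  proof -
    have "\<exists>c. prp \<Phi> c" unfolding prp_def G_def N_def
      using greedy_bound[OF prior disj qb mg pos snn kC C0] .
    then show ?thesis unfolding cf_def by (rule someI_ex)
  qed
  have actD: "act Ez \<pi>a \<Phi> j z \<longleftrightarrow> (\<exists>e. \<pi>a (run \<pi>a \<Phi> j) = Some e \<and> e \<in> Ez z)" for \<Phi> j z
    by (rule act_def[OF prior disj qb mg])
  have scD: "sc (favg_marg p f) \<pi>a \<Phi> j = (case \<pi>a (run \<pi>a \<Phi> j) of None \<Rightarrow> 0 | Some e \<Rightarrow> favg_marg p f e (run \<pi>a \<Phi> j))" for \<Phi> j
    by (rule sc_def[OF prior disj qb mg])
  define ndA where "ndA \<psi> = (case \<pi>a \<psi> of None \<Rightarrow> dom \<psi> | Some e \<Rightarrow> insert e (dom \<psi>))" for \<psi>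
  define gA where "gA \<psi> \<Phi>' = f (ndA \<psi>) \<Phi>' - f (dom \<psi>) \<Phi>'" for \<psi> \<Phi>'
  have E6: "(\<Sum>\<Phi>\<in>UNIV. p \<Phi> * sc (favg_marg p f) \<pi>a \<Phi> j) =
      (\<Sum>\<Phi>\<in>UNIV. p \<Phi> * (f (dom (run \<pi>a \<Phi> (Suc j))) \<Phi> - f (dom (run \<pi>a \<Phi> j)) \<Phi>))" for j
  proof -
    have sc_eq: "sc (favg_marg p f) \<pi>a \<Phi> j = condE p (id (run \<pi>a \<Phi> j)) (gA (run \<pi>a \<Phi> j))" for \<Phi>
    proof (cases "\<pi>a (run \<pi>a \<Phi> j)")
      case None
      have "gA (run \<pi>a \<Phi> j) = (\<lambda>_. 0)" by (rule ext) (simp add: gA_def ndA_def None)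
      then show ?thesis using None by (simp add: scD condE_zero)
    next
      case (Some e)
      have "gA (run \<pi>a \<Phi> j) = (\<lambda>\<Phi>'. f (dom (run \<pi>a \<Phi> j) \<union> {e}) \<Phi>' - f (dom (run \<pi>a \<Phi> j)) \<Phi>')"
        by (rule ext) (simp add: gA_def ndA_def Some)
      then show ?thesis using Some by (simp add: scD favg_condE)
    qed
    have "(\<Sum>\<Phi>\<in>UNIV. p \<Phi> * condE p (id (run \<pi>a \<Phi> j)) (gA (run \<pi>a \<Phi> j))) = (\<Sum>\<Phi>\<in>UNIV. p \<Phi> * gA (run \<pi>a \<Phi> j) \<Phi>)"
    proof (rule tower[OF prior, where K = "\<lambda>\<Phi>. run \<pi>a \<Phi> j" and hist = id and g = gA])
      show "\<And>\<Phi>. 0 < p \<Phi> \<Longrightarrow> consistent \<Phi> (id (run \<pi>a \<Phi> j))" by (simp add: cons_run)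
      show "\<And>\<Phi> \<Phi>'. 0 < p \<Phi> \<Longrightarrow> 0 < p \<Phi>' \<Longrightarrow> consistent \<Phi>' (id (run \<pi>a \<Phi> j)) \<Longrightarrow> run \<pi>a \<Phi>' j = run \<pi>a \<Phi> j"
        using run_det[of _ \<pi>a _ j j] by simp
    qed
    moreover have "gA (run \<pi>a \<Phi> j) \<Phi> = f (dom (run \<pi>a \<Phi> (Suc j))) \<Phi> - f (dom (run \<pi>a \<Phi> j)) \<Phi>" for \<Phi>
      by (simp add: gA_def ndA_def run_Suc dom_step)
    ultimately show ?thesis using sc_eq by simp
  qed
  have Esc: "(\<Sum>j<N. \<Sum>\<Phi>\<in>UNIV. p \<Phi> * sc (favg_marg p f) \<pi>a \<Phi> j) \<le> EG"
  proof -
    have "(\<Sum>j<N. \<Sum>\<Phi>\<in>UNIV. p \<Phi> * sc (favg_marg p f) \<pi>a \<Phi> j) =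
        (\<Sum>\<Phi>\<in>UNIV. p \<Phi> * (\<Sum>j<N. f (dom (run \<pi>a \<Phi> (Suc j))) \<Phi> - f (dom (run \<pi>a \<Phi> j)) \<Phi>))"
      by (simp add: E6 sum_distrib_left sum.swap[of _ "{..<N}"])
    also have "\<dots> = (\<Sum>\<Phi>\<in>UNIV. p \<Phi> * (f (dom (G \<Phi>)) \<Phi> - f (dom (run \<pi>a \<Phi> 0)) \<Phi>))"
    proof -
      have tel: "(\<Sum>j<N. f (dom (run \<pi>a \<Phi> (Suc j))) \<Phi> - f (dom (run \<pi>a \<Phi> j)) \<Phi>) = f (dom (run \<pi>a \<Phi> N)) \<Phi> - f (dom (run \<pi>a \<Phi> 0)) \<Phi>" for \<Phi>
        by (rule sum_lessThan_telescope)
      show ?thesis by (simp only: tel G_def)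
    qed
    also have "\<dots> \<le> EG" unfolding EG_def
      using prior_nonneg[OF prior] nonneg by (intro sum_mono mult_left_mono) auto
    finally show ?thesis .
  qed
  define ndS where "ndS \<psi> = (case \<pi>s \<psi> of None \<Rightarrow> dom \<psi> | Some e \<Rightarrow> insert e (dom \<psi>))" for \<psi>
  define g :: "('e \<rightharpoonup> 'o) \<times> ('e \<rightharpoonup> 'o) \<Rightarrow> ('e \<Rightarrow> 'o) \<Rightarrow> real"
    where "g = (\<lambda>(a, bb). \<lambda>\<Phi>'. f (dom a \<union> ndS bb) \<Phi>' - f (dom a \<union> dom bb) \<Phi>')"
 define hist :: "('e \<rightharpoonup> 'o) \<times> ('e \<rightharpoonup> 'o) \<Rightarrow> ('e \<rightharpoonup> 'o)" where "hist = (\<lambda>(a, bb). (a ++ bb :: 'e \<rightharpoonup> 'o))"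
  define F where "F \<Phi> i = f (dom (G \<Phi>) \<union> dom (run \<pi>s \<Phi> i)) \<Phi>" for \<Phi> i
  have gF: "g (G \<Phi>, run \<pi>s \<Phi> i) \<Phi> = F \<Phi> (Suc i) - F \<Phi> i" for \<Phi> i
    by (simp add: g_def F_def ndS_def run_Suc dom_step)
  have E3: "(\<Sum>\<Phi>\<in>UNIV. p \<Phi> * condE p (hist (G \<Phi>, run \<pi>s \<Phi> i)) (g (G \<Phi>, run \<pi>s \<Phi> i))) =
            (\<Sum>\<Phi>\<in>UNIV. p \<Phi> * g (G \<Phi>, run \<pi>s \<Phi> i) \<Phi>)" for i
  proof (rule tower[OF prior, where K = "\<lambda>\<Phi>. (G \<Phi>, run \<pi>s \<Phi> i)" and hist = hist and g = g])
    show "\<And>\<Phi>. 0 < p \<Phi> \<Longrightarrow> consistent \<Phi> (hist (G \<Phi>, run \<pi>s \<Phi> i))"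
      unfolding hist_def G_def by (simp add: cons_add2 cons_run)
    fix \<Phi> \<Phi>' assume "0 < p \<Phi>" "0 < p \<Phi>'" and c: "consistent \<Phi>' (hist (G \<Phi>, run \<pi>s \<Phi> i))"
    have c': "consistent \<Phi>' (run \<pi>a \<Phi> N ++ run \<pi>s \<Phi> i)" using c by (simp add: hist_def G_def)
    have c1: "consistent \<Phi>' (G \<Phi>)" and c2: "consistent \<Phi>' (run \<pi>s \<Phi> i)"
      using cons_add[OF cons_run cons_run c'] unfolding G_def by auto
    have "G \<Phi>' = G \<Phi>" using run_det[OF c1[unfolded G_def]] by (simp add: G_def)
    moreover have "run \<pi>s \<Phi>' i = run \<pi>s \<Phi> i" using run_det[OF c2] by simp
    ultimately show "(G \<Phi>', run \<pi>s \<Phi>' i) = (G \<Phi>, run \<pi>s \<Phi> i)" by simp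
  qed
  define cc where "cc \<Phi> x = (if x \<in> dom (G \<Phi>) then 0 else cf \<Phi> (zof b Ez x))" for \<Phi> x
  define w where "w \<Phi> i = (case \<pi>s (run \<pi>s \<Phi> i) of None \<Rightarrow> 0 | Some e \<Rightarrow> if e \<in> dom (run \<pi>s \<Phi> i) then 0 else cc \<Phi> e)" for \<Phi> i
  have E4: "condE p (hist (G \<Phi>, run \<pi>s \<Phi> i)) (g (G \<Phi>, run \<pi>s \<Phi> i)) \<le> w \<Phi> i" if pos: "p \<Phi> > 0" for \<Phi> i
  proof -
    let ?a = "G \<Phi>" and ?r = "run \<pi>s \<Phi> i"
    let ?h = "?a ++ ?r"
    have P: "prp \<Phi> (cf \<Phi>)" by (rule cfp[OF pos])
    have cc0: "0 \<le> cc \<Phi> x" for x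
      using P zof[OF cover, of x] unfolding cc_def prp_def by auto
    have ch: "consistent \<Phi> ?h" unfolding G_def by (simp add: cons_add2 cons_run)
    have vh: "valid_pr p ?h" using valid_of[OF prior pos ch] .
    show ?thesis
    proof (cases "\<pi>s ?r")
      case None
      then have "g (?a, ?r) = (\<lambda>\<Phi>'. 0)" by (simp add: g_def ndS_def)
      then show ?thesis using None by (simp add: condE_zero w_def)
    next
      case (Some e)
      have "g (?a, ?r) = (\<lambda>\<Phi>'. f (dom ?h \<union> {e}) \<Phi>' - f (dom ?h) \<Phi>')"
        using Some by (auto simp: g_def ndS_def Un_commute insert_commute)
      then have ce: "condE p (hist (?a, ?r)) (g (?a, ?r)) = favg_marg p f e ?h"
        by (simp add: hist_def favg_condE)
      show ?thesis
      proof (cases "e \<in> dom ?h")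
        case True
        then have "favg_marg p f e ?h = 0" by (rule favg_in_dom)
        then show ?thesis using ce cc0 Some by (simp add: w_def)
      next
        case False
        then have er: "e \<notin> dom ?r" and ea: "e \<notin> dom ?a" by auto
        let ?z = "zof b Ez e"
        have z: "?z \<in> {1..b}" "e \<in> Ez ?z" using zof[OF cover] by auto
        have "\<forall>j<N. act Ez \<pi>a \<Phi> j ?z \<longrightarrow> favg_marg p f e ?h \<le> favg_marg p f e (run \<pi>a \<Phi> j)"
        proof (intro allI impI)
          fix j assume j: "j < N"
          have vj: "valid_pr p (run \<pi>a \<Phi> j)" using valid_of[OF prior pos cons_run] .
          have "run \<pi>a \<Phi> j \<subseteq>\<^sub>m ?a" unfolding G_def using j by (intro run_mono) simp
          moreover have "?a \<subseteq>\<^sub>m ?h" unfolding G_def by (rule le_add_left[OF cons_run[of \<Phi>] cons_run[of \<Phi>]])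
          ultimately have le: "run \<pi>a \<Phi> j \<subseteq>\<^sub>m ?h" by (rule map_le_trans)
          show "favg_marg p f e ?h \<le> favg_marg p f e (run \<pi>a \<Phi> j)"
            by (rule adsub[unfolded adaptive_submodular_def, rule_format, OF conjI[OF vj conjI[OF vh conjI[OF le False]]]])
        qed
        then have "favg_marg p f e ?h \<le> cf \<Phi> ?z" using P z ea unfolding prp_def by blast
        then show ?thesis using ce Some er ea by (simp add: w_def cc_def)
      qed
    qed
  qed
  have E5: "(\<Sum>i<N. w \<Phi> i) \<le> C * (\<Sum>j<N. sc (favg_marg p f) \<pi>a \<Phi> j)" if pos: "p \<Phi> > 0" for \<Phi>
  proof -
    have P: "prp \<Phi> (cf \<Phi>)" by (rule cfp[OF pos])
    then have c0: "\<forall>z\<in>{1..b}. 0 \<le> cf \<Phi> z" unfolding prp_def by blast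
    let ?S = "dom (run \<pi>s \<Phi> N)"
    have "(\<Sum>i<N. w \<Phi> i) = (\<Sum>x\<in>?S. cc \<Phi> x)"
      unfolding w_def by (rule sum_new) (simp_all only: run_Suc dom_step run_0 dom_empty)
    also have "\<dots> \<le> (\<Sum>x\<in>?S. cf \<Phi> (zof b Ez x))"
      unfolding cc_def using c0 zof[OF cover] by (intro sum_mono) auto
    also have "\<dots> = (\<Sum>z\<in>{1..b}. real (card (?S \<inter> Ez z)) * cf \<Phi> z)" by (rule part_sum[OF cover disj])
    also have "\<dots> \<le> (\<Sum>z\<in>{1..b}. real (k z) * cf \<Phi> z)"
    proof (intro sum_mono mult_right_mono)
      fix z assume z: "z \<in> {1..b}"
      have "pm_indep b Ez k (sel \<pi>s \<Phi>)" using feas pos by (simp add: feasible_policy_def)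
      then show "real (card (?S \<inter> Ez z)) \<le> real (k z)" using z
        by (simp add: pm_indep_def sel_def final_obs_run N_def)
      show "0 \<le> cf \<Phi> z" using c0 z by blast
    qed
    also have "\<dots> \<le> C * (\<Sum>j<N. sc (favg_marg p f) \<pi>a \<Phi> j)" using P unfolding prp_def by blast
    finally show ?thesis .
  qed
  have "favg_pol p f (sel \<pi>s) \<le> (\<Sum>\<Phi>\<in>UNIV. p \<Phi> * F \<Phi> N)"
    unfolding favg_pol_def
  proof (rule wsum_mono[OF prior])
    fix \<Phi> :: "'e \<Rightarrow> 'o" assume pos: "p \<Phi> > 0"
    show "f (sel \<pi>s \<Phi>) \<Phi> \<le> F \<Phi> N" unfolding F_def sel_def final_obs_run N_def
      by (rule pw_mono[OF prior mindep wcmono pos]) auto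
  qed
  also have "(\<Sum>\<Phi>\<in>UNIV. p \<Phi> * F \<Phi> N) = EG + (\<Sum>i<N. \<Sum>\<Phi>\<in>UNIV. p \<Phi> * g (G \<Phi>, run \<pi>s \<Phi> i) \<Phi>)"
  proof -
    have "F \<Phi> N = F \<Phi> 0 + (\<Sum>i<N. g (G \<Phi>, run \<pi>s \<Phi> i) \<Phi>)" for \<Phi>
      by (simp add: gF sum_lessThan_telescope)
    moreover have "F \<Phi> 0 = f (dom (G \<Phi>)) \<Phi>" for \<Phi> by (simp add: F_def)
    ultimately show ?thesis unfolding EG_def
      by (simp add: distrib_left sum.distrib sum_distrib_left sum.swap[of _ "{..<N}"])
  qed
  also have "(\<Sum>i<N. \<Sum>\<Phi>\<in>UNIV. p \<Phi> * g (G \<Phi>, run \<pi>s \<Phi> i) \<Phi>) =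
      (\<Sum>i<N. \<Sum>\<Phi>\<in>UNIV. p \<Phi> * condE p (hist (G \<Phi>, run \<pi>s \<Phi> i)) (g (G \<Phi>, run \<pi>s \<Phi> i)))"
    using E3 by simp
  also have "\<dots> \<le> (\<Sum>i<N. \<Sum>\<Phi>\<in>UNIV. p \<Phi> * w \<Phi> i)"
    by (intro sum_mono[of "{..<N}"] wsum_mono[OF prior] E4) auto
  also have "\<dots> = (\<Sum>\<Phi>\<in>UNIV. p \<Phi> * (\<Sum>i<N. w \<Phi> i))"
    by (simp add: sum_distrib_left sum.swap[of _ "{..<N}"])
  also have "\<dots> \<le> (\<Sum>\<Phi>\<in>UNIV. p \<Phi> * (C * (\<Sum>j<N. sc (favg_marg p f) \<pi>a \<Phi> j)))"
    by (rule wsum_mono[OF prior E5])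
  also have "\<dots> = C * (\<Sum>j<N. \<Sum>\<Phi>\<in>UNIV. p \<Phi> * sc (favg_marg p f) \<pi>a \<Phi> j)"
    by (simp add: sum_distrib_left sum.swap[of _ "{..<N}"] algebra_simps)
  also have "\<dots> \<le> C * EG" using Esc C0 by (intro mult_left_mono)
  finally show ?thesis by (simp add: EG_def G_def N_def algebra_simps)
qed




theorem theorem5:
  fixes p :: "('e::finite \<Rightarrow> 'o::finite) \<Rightarrow> real"
    and f :: "'e set \<Rightarrow> ('e \<Rightarrow> 'o) \<Rightarrow> real"
    and b :: nat and Ez :: "nat \<Rightarrow> 'e set" and k :: "nat \<Rightarrow> nat"
    and \<pi>mw \<pi>ma :: "('e, 'o) policy"
  assumes prior: "is_prior p"
    and disj: "\<forall>z\<in>{1..b}. \<forall>z'\<in>{1..b}. z \<noteq> z' \<longrightarrow> Ez z \<inter> Ez z' = {}"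
    and cover: "(\<Union>z\<in>{1..b}. Ez z) = UNIV"
    and kbounds: "\<forall>z\<in>{1..b}. 2 \<le> k z \<and> k z \<le> card (Ez z)"
    and nonneg: "\<forall>S \<phi>. 0 \<le> f S \<phi>"
    and wcmono: "wc_monotone p f"
    and wcsub: "wc_submodular p f"
    and adsub: "adaptive_submodular p f"
    and mindep: "minimal_dependency p f"
    and mw: "is_pi_mw p f b Ez k \<pi>mw"
    and ma: "is_pi_ma p f b Ez k \<pi>ma"
  shows "let \<gamma> = Min ((\<lambda>z. real (k z div 2) / real (k z)) ` {1..b}) in
         \<forall>\<pi>. feasible_policy p b Ez k \<pi> \<longrightarrow>
           fwc_pol p f (sel_concat \<pi>mw \<pi>ma) \<ge> \<gamma> / (\<gamma> + 1) * fwc_pol p f (sel \<pi>) \<and>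
           favg_pol p f (sel_concat \<pi>mw \<pi>ma) \<ge> \<gamma> / (\<gamma> + 1) * favg_pol p f (sel \<pi>)"
proof -
  define \<gamma> where "\<gamma> = Min ((\<lambda>z. real (k z div 2) / real (k z)) ` {1..b})"
  define N where "N = card (UNIV::'e set)"
  have bne: "{1..b} \<noteq> {}"
  proof
    assume "{1..b} = {}"
    then have "(UNIV::'e set) = {}" using cover by simp
    then show False by simp
  qed
  have gpos: "\<gamma> > 0" unfolding \<gamma>_def
  proof (subst Min_gr_iff)
    show "finite ((\<lambda>z. real (k z div 2) / real (k z)) ` {1..b})" by simp
    show "(\<lambda>z. real (k z div 2) / real (k z)) ` {1..b} \<noteq> {}" using bne by simp
    show "\<forall>a\<in>(\<lambda>z. real (k z div 2) / real (k z)) ` {1..b}. 0 < a"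
    proof
      fix a assume "a \<in> (\<lambda>z. real (k z div 2) / real (k z)) ` {1..b}"
      then obtain z where z: "z \<in> {1..b}" "a = real (k z div 2) / real (k z)" by blast
      have "k z \<ge> 2" using kbounds z by blast
      then have "k z div 2 \<ge> 1" by simp
      then show "0 < a" using z \<open>k z \<ge> 2\<close> by simp
    qed
  qed
  have gle: "\<gamma> \<le> real (k z div 2) / real (k z)" if "z \<in> {1..b}" for z
    unfolding \<gamma>_def using that by (intro Min_le) auto
  define C where "C = 1 / \<gamma>"
  have C0: "0 \<le> C" using gpos by (simp add: C_def)
  have kCw: "\<forall>z\<in>{1..b}. real (k z) \<le> C * real (k z div 2)"
  proof
    fix z assume z: "z \<in> {1..b}"
    have kp: "real (k z) > 0" using kbounds z by fastforce
    have "\<gamma> * real (k z) \<le> real (k z div 2)" using gle[OF z] kp by (simp add: field_simps)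
    then show "real (k z) \<le> C * real (k z div 2)" using gpos by (simp add: C_def field_simps)
  qed
  have kCa: "\<forall>z\<in>{1..b}. real (k z) \<le> C * real ((k z + 1) div 2)"
  proof
    fix z assume z: "z \<in> {1..b}"
    have "real (k z div 2) \<le> real ((k z + 1) div 2)" by simp
    then show "real (k z) \<le> C * real ((k z + 1) div 2)" using kCw z C0
      by (meson mult_left_mono order_trans)
  qed
  have qbw: "\<forall>z\<in>{1..b}. 1 \<le> k z div 2 \<and> k z div 2 \<le> card (Ez z)"
    using kbounds by fastforce
  have qba: "\<forall>z\<in>{1..b}. 1 \<le> (k z + 1) div 2 \<and> (k z + 1) div 2 \<le> card (Ez z)"
    using kbounds by fastforce
  have mgw: "meta_greedy p (fwc_marg p f) b Ez (\<lambda>z. k z div 2) \<pi>mw" using mw by (simp add: is_pi_mw_def)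
  have mga: "meta_greedy p (favg_marg p f) b Ez (\<lambda>z. (k z + 1) div 2) \<pi>ma" using ma by (simp add: is_pi_ma_def)
  have alg: "\<gamma> / (\<gamma> + 1) * ((1 + C) * y) = y" for y
  proof -
    have c1: "1 + C = (\<gamma> + 1) / \<gamma>" using gpos by (simp add: C_def field_simps)
    have ne: "\<gamma> + 1 \<noteq> 0" "\<gamma> \<noteq> 0" using gpos by auto
    have "\<gamma> / (\<gamma> + 1) * ((\<gamma> + 1) / \<gamma>) = 1" using ne by simp
    then show ?thesis unfolding c1 by (metis mult.assoc mult_1)
  qed
  have gg0: "0 \<le> \<gamma> / (\<gamma> + 1)" using gpos by simp
  have ex_pos: "\<exists>\<phi>. p \<phi> > 0"
  proof (rule ccontr)
    assume "\<not> (\<exists>\<phi>. p \<phi> > 0)"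
    then have "\<forall>\<phi>. p \<phi> = 0" using prior_nonneg[OF prior] by (metis order_le_less)
    then show False using prior by (simp add: is_prior_def)
  qed
  have main: "fwc_pol p f (sel_concat \<pi>mw \<pi>ma) \<ge> \<gamma> / (\<gamma> + 1) * fwc_pol p f (sel \<pi>) \<and>
           favg_pol p f (sel_concat \<pi>mw \<pi>ma) \<ge> \<gamma> / (\<gamma> + 1) * favg_pol p f (sel \<pi>)"
    if feas: "feasible_policy p b Ez k \<pi>" for \<pi>
  proof
    have each: "\<gamma> / (\<gamma> + 1) * fwc_pol p f (sel \<pi>) \<le> f (sel_concat \<pi>mw \<pi>ma \<phi>) \<phi>" if pos: "p \<phi> > 0" for \<phi>
    proof -
      have "fwc_pol p f (sel \<pi>) \<le> (1 + C) * f (dom (run \<pi>mw \<phi> N)) \<phi>"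
        unfolding N_def
        by (rule wc_part[OF prior disj cover qbw mgw nonneg wcmono wcsub mindep kCw C0 feas pos])
      then have "\<gamma> / (\<gamma> + 1) * fwc_pol p f (sel \<pi>) \<le> \<gamma> / (\<gamma> + 1) * ((1 + C) * f (dom (run \<pi>mw \<phi> N)) \<phi>)"
        using gg0 by (rule mult_left_mono)
      also have "\<dots> = f (dom (run \<pi>mw \<phi> N)) \<phi>" by (rule alg)
      also have "\<dots> \<le> f (sel_concat \<pi>mw \<pi>ma \<phi>) \<phi>"
        by (rule pw_mono[OF prior mindep wcmono pos]) (auto simp: sel_concat_def sel_def final_obs_run N_def)
      finally show ?thesis .
    qed
    show "fwc_pol p f (sel_concat \<pi>mw \<pi>ma) \<ge> \<gamma> / (\<gamma> + 1) * fwc_pol p f (sel \<pi>)"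
      unfolding fwc_pol_def[of p f "sel_concat \<pi>mw \<pi>ma"]
      using ex_pos each by (subst Min_ge_iff) auto
    have "favg_pol p f (sel \<pi>) \<le> (1 + C) * (\<Sum>\<Phi>\<in>UNIV. p \<Phi> * f (dom (run \<pi>ma \<Phi> N)) \<Phi>)"
      unfolding N_def
      by (rule avg_part[OF prior disj cover qba mga nonneg wcmono adsub mindep kCa C0 feas])
    then have "\<gamma> / (\<gamma> + 1) * favg_pol p f (sel \<pi>) \<le> \<gamma> / (\<gamma> + 1) * ((1 + C) * (\<Sum>\<Phi>\<in>UNIV. p \<Phi> * f (dom (run \<pi>ma \<Phi> N)) \<Phi>))"
      using gg0 by (rule mult_left_mono)
    also have "\<dots> = (\<Sum>\<Phi>\<in>UNIV. p \<Phi> * f (dom (run \<pi>ma \<Phi> N)) \<Phi>)" by (rule alg)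
    also have "\<dots> \<le> favg_pol p f (sel_concat \<pi>mw \<pi>ma)"
      unfolding favg_pol_def
    proof (rule wsum_mono[OF prior])
      fix \<Phi> :: "'e \<Rightarrow> 'o" assume pos: "p \<Phi> > 0"
      show "f (dom (run \<pi>ma \<Phi> N)) \<Phi> \<le> f (sel_concat \<pi>mw \<pi>ma \<Phi>) \<Phi>"
        by (rule pw_mono[OF prior mindep wcmono pos]) (auto simp: sel_concat_def sel_def final_obs_run N_def)
    qed
    finally show "favg_pol p f (sel_concat \<pi>mw \<pi>ma) \<ge> \<gamma> / (\<gamma> + 1) * favg_pol p f (sel \<pi>)" .
  qed
  show ?thesis unfolding Let_def \<gamma>_def[symmetric] using main by blast
qed


end
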